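(* Let $n\ge 3$ be an odd integer and $(\mathcal{C},\Sigma)$ an $n$-angulated category. For a subgroup $H$ of $K_0(\mathcal{C})$, let $\mathcal{A}_H$ be the full subcategory of $\mathcal{C}$ consisting of the objects $A$ with $[A]\in H$. Declare the $n$-angles of $\mathcal{A}_H$ to be those $n$-angles of $\mathcal{C}$ all of whose objects lie in $\mathcal{A}_H$. Then $(\mathcal{A}_H,\Sigma)$ is a complete and dense $n$-angulated subcategory of $(\mathcal{C},\Sigma)$.
   Context: All categories are small. Fix an integer $n\ge 3$. Let $\mathcal{C}$ be an additive category with an automorphism $\Sigma$. An $n$-$\Sigma$-sequence in $\mathcal{C}$ is a diagram $A_1\xrightarrow{\alpha_1}A_2\xrightarrow{\alpha_2}\cdots\xrightarrow{\alpha_{n-1}}A_n\xrightarrow{\alpha_n}\Sigma A_1$. Its left rotation is $A_2\xrightarrow{\alpha_2}\cdots\xrightarrow{\alpha_n}\Sigma A_1\xrightarrow{(-1)^n\Sigma\alpha_1}\Sigma A_2$. A morphism from $(A_\bullet,\alpha)$ to $(B_\bullet,\beta)$ is a tuple $(\varphi_1,\dots,\varphi_n)$, $\varphi_i:A_i\to B_i$, with $\beta_i\varphi_i=\varphi_{i+1}\alpha_i$ for $1\le i\le n-1$ and $\beta_n\varphi_n=(\Sigma\varphi_1)\alpha_n$; it is an isomorphism if all $\varphi_i$ are isomorphisms. Direct sums of sequences are taken termwise. $(\mathcal{C},\Sigma)$ is $n$-angulated if it is equipped with a collection $\mathscr N$ of $n$-$\Sigma$-sequences, called $n$-angles, such that: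 (N1)(a) $\mathscr N$ is closed under direct sums, direct summands and isomorphisms of $n$-$\Sigma$-sequences; (b) for every object $A$, the trivial sequence $A\xrightarrow{1}A\to0\to\cdots\to0\to\Sigma A$ is in $\mathscr N$; (c) every morphism $A_1\to A_2$ is the first morphism of some $n$-angle; (N2) an $n$-$\Sigma$-sequence is in $\mathscr N$ iff its left rotation is; (N3) given $n$-angles $(A_\bullet,\alpha),(B_\bullet,\beta)$ and $\varphi_1:A_1\to B_1$, $\varphi_2:A_2\to B_2$ with $\beta_1\varphi_1=\varphi_2\alpha_1$, there exist $\varphi_3,\dots,\varphi_n$ making $(\varphi_1,\dots,\varphi_n)$ a morphism; (N4) in (N3) the $\varphi_i$ can be chosen so that the mapping cone $A_2\oplus B_1\to A_3\oplus B_2\to\cdots\to\Sigma A_1\oplus B_n\to\Sigma A_2\oplus\Sigma B_1$, with maps $\left[\begin{smallmatrix}-\alpha_{i+1}&0\\ \varphi_{i+1}&\beta_i\end{smallmatrix}\right]$ ($1\le i\le n-1$) and last map $\left[\begin{smallmatrix}-\Sigma\alpha_1&0\\ \Sigma\varphi_1&\beta_n\end{smallmatrix}\right]$, is an $n$-angle. Grothendieck group: $F(\mathcal{C})$ is the free abelian group on isomorphism classes $\langle A\rangle$ of objects; for an $n$-angle $A_\bullet$, $\chi(A_\bullet)=\sum_{i=1}^n(-1)^{i+1}\langle A_i\rangle$; $R(\mathcal{C})$ is generated by all $\chi(A_\bullet)$, together with $\langle 0\rangle$ when $n$ is even; $K_0(\mathcal{C})=F(\mathcal{C})/R(\mathcal{C})$,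 $[A]$ the class of $\langle A\rangle$. An additive functor $L:\mathcal{C}\to\mathcal{C}'$ between $n$-angulated categories is $n$-angulated if there is a natural isomorphism $\eta:L\circ\Sigma\to\Sigma'\circ L$ such that $L$ sends each $n$-angle $(A_\bullet,\alpha)$ to the $n$-angle $L A_1\xrightarrow{L\alpha_1}\cdots\xrightarrow{L\alpha_{n-1}}LA_n\xrightarrow{\eta\circ L\alpha_n}\Sigma'LA_1$. An $n$-angulated subcategory of $(\mathcal{C},\Sigma)$ is a full subcategory $\mathcal{A}$, closed under isomorphisms, on which $\Sigma$ restricts to an automorphism, equipped with $n$-angles making $(\mathcal{A},\Sigma)$ $n$-angulated, such that the inclusion $\mathcal{A}\to\mathcal{C}$ is $n$-angulated. $\mathcal{A}$ is dense if every object of $\mathcal{C}$ is a direct summand of an object of $\mathcal{A}$; complete if whenever an $n$-angle $A_1\to\cdots\to A_n\to\Sigma A_1$ in $\mathcal{C}$ has $n-1$ of $A_1,\dots,A_n$ in $\mathcal{A}$, the remaining one is in $\mathcal{A}$. *)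

theory Defs
  imports "HOL-Algebra.Free_Abelian_Groups" "HOL-Algebra.Generated_Groups"
begin

text \<open>A small category given concretely: a set of objects, hom-sets, composition
  (cmp g f = g after f), identities, an addition on morphisms with zero morphisms
  (the preadditive structure), and a pair (object map, morphism map) for Sigma.\<close>

record ('o, 'm) catS =
  ob   :: "'o set"
  hom  :: "'o \<Rightarrow> 'o \<Rightarrow> 'm set"
  cmp  :: "'m \<Rightarrow> 'm \<Rightarrow> 'm"
  idm  :: "'o \<Rightarrow> 'm"
  madd :: "'m \<Rightarrow> 'm \<Rightarrow> 'm"
  mzero :: "'o \<Rightarrow> 'o \<Rightarrow> 'm"
  sO   :: "'o \<Rightarrow> 'o"
  sM   :: "'m \<Rightarrow> 'm"

definition category :: "('o, 'm) catS \<Rightarrow> bool" where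
  "category C \<longleftrightarrow>
     (\<forall>A B. (A \<notin> ob C \<or> B \<notin> ob C) \<longrightarrow> hom C A B = {}) \<and>
     (\<forall>A\<in>ob C. \<forall>B\<in>ob C. \<forall>A'\<in>ob C. \<forall>B'\<in>ob C. \<forall>f.
        f \<in> hom C A B \<longrightarrow> f \<in> hom C A' B' \<longrightarrow> A = A' \<and> B = B') \<and>
     (\<forall>A\<in>ob C. idm C A \<in> hom C A A) \<and>
     (\<forall>A B D f g. f \<in> hom C A B \<longrightarrow> g \<in> hom C B D \<longrightarrow> cmp C g f \<in> hom C A D) \<and>
     (\<forall>A B f. f \<in> hom C A B \<longrightarrow> cmp C (idm C B) f = f \<and> cmp C f (idm C A) = f) \<and>
     (\<forall>A B D E f g h. f \<in> hom C A B \<longrightarrow> g \<in> hom C B D \<longrightarrow> h \<in> hom C D E \<longrightarrow>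
        cmp C h (cmp C g f) = cmp C (cmp C h g) f)"

definition homgrp :: "('o, 'm) catS \<Rightarrow> 'o \<Rightarrow> 'o \<Rightarrow> 'm monoid" where
  "homgrp C A B = \<lparr>carrier = hom C A B, monoid.mult = madd C, one = mzero C A B\<rparr>"

definition preadditive :: "('o, 'm) catS \<Rightarrow> bool" where
  "preadditive C \<longleftrightarrow> category C \<and>
     (\<forall>A\<in>ob C. \<forall>B\<in>ob C. comm_group (homgrp C A B)) \<and>
     (\<forall>A B D f g h. f \<in> hom C A B \<longrightarrow> g \<in> hom C A B \<longrightarrow> h \<in> hom C B D \<longrightarrow>
        cmp C h (madd C f g) = madd C (cmp C h f) (cmp C h g)) \<and>
     (\<forall>A B D f g h. h \<in> hom C A B \<longrightarrow> f \<in> hom C B D \<longrightarrow> g \<in> hom C B D \<longrightarrow>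
        cmp C (madd C f g) h = madd C (cmp C f h) (cmp C g h))"

definition mneg :: "('o, 'm) catS \<Rightarrow> 'm \<Rightarrow> 'm" where
  "mneg C f = (SOME g. \<exists>A\<in>ob C. \<exists>B\<in>ob C. f \<in> hom C A B \<and> g \<in> hom C A B \<and>
                     madd C f g = mzero C A B)"

definition is_zero_obj :: "('o, 'm) catS \<Rightarrow> 'o \<Rightarrow> bool" where
  "is_zero_obj C Z \<longleftrightarrow> Z \<in> ob C \<and>
     (\<forall>A\<in>ob C. (\<exists>!f. f \<in> hom C Z A) \<and> (\<exists>!f. f \<in> hom C A Z))"

definition biprod :: "('o, 'm) catS \<Rightarrow> 'o \<Rightarrow> 'o \<Rightarrow> 'o \<Rightarrow> 'm \<Rightarrow> 'm \<Rightarrow> 'm \<Rightarrow> 'm \<Rightarrow> bool" where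
  "biprod C A B S i1 i2 p1 p2 \<longleftrightarrow> A \<in> ob C \<and> B \<in> ob C \<and> S \<in> ob C \<and>
     i1 \<in> hom C A S \<and> i2 \<in> hom C B S \<and> p1 \<in> hom C S A \<and> p2 \<in> hom C S B \<and>
     cmp C p1 i1 = idm C A \<and> cmp C p2 i2 = idm C B \<and>
     cmp C p1 i2 = mzero C B A \<and> cmp C p2 i1 = mzero C A B \<and>
     madd C (cmp C i1 p1) (cmp C i2 p2) = idm C S"

definition additive :: "('o, 'm) catS \<Rightarrow> bool" where
  "additive C \<longleftrightarrow> preadditive C \<and> (\<exists>Z. is_zero_obj C Z) \<and>
     (\<forall>A\<in>ob C. \<forall>B\<in>ob C. \<exists>S i1 i2 p1 p2. biprod C A B S i1 i2 p1 p2)"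

definition is_iso :: "('o, 'm) catS \<Rightarrow> 'o \<Rightarrow> 'o \<Rightarrow> 'm \<Rightarrow> bool" where
  "is_iso C A B f \<longleftrightarrow> f \<in> hom C A B \<and>
     (\<exists>g\<in>hom C B A. cmp C g f = idm C A \<and> cmp C f g = idm C B)"

definition isomorphic :: "('o, 'm) catS \<Rightarrow> 'o \<Rightarrow> 'o \<Rightarrow> bool" where
  "isomorphic C A B \<longleftrightarrow> (\<exists>f. is_iso C A B f)"

definition sigma_auto :: "('o, 'm) catS \<Rightarrow> bool" where
  "sigma_auto C \<longleftrightarrow>
     bij_betw (sO C) (ob C) (ob C) \<and>
     (\<forall>A\<in>ob C. \<forall>B\<in>ob C. bij_betw (sM C) (hom C A B) (hom C (sO C A) (sO C B))) \<and>
     (\<forall>A\<in>ob C. sM C (idm C A) = idm C (sO C A)) \<and>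
     (\<forall>A B D f g. f \<in> hom C A B \<longrightarrow> g \<in> hom C B D \<longrightarrow>
        sM C (cmp C g f) = cmp C (sM C g) (sM C f))"

text \<open>An n-Sigma-sequence is a pair (A, alpha) of functions on indices 1..n
  (values outside 1..n are irrelevant).\<close>
type_synonym ('o, 'm) nseq = "(nat \<Rightarrow> 'o) \<times> (nat \<Rightarrow> 'm)"

definition is_nseq :: "('o, 'm) catS \<Rightarrow> nat \<Rightarrow> ('o, 'm) nseq \<Rightarrow> bool" where
  "is_nseq C n X \<longleftrightarrow> (case X of (A, \<alpha>) \<Rightarrow>
     (\<forall>i\<in>{1..n}. A i \<in> ob C) \<and>
     (\<forall>i\<in>{1..<n}. \<alpha> i \<in> hom C (A i) (A (Suc i))) \<and>
     \<alpha> n \<in> hom C (A n) (sO C (A 1)))"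

definition lrot :: "('o, 'm) catS \<Rightarrow> nat \<Rightarrow> ('o, 'm) nseq \<Rightarrow> ('o, 'm) nseq" where
  "lrot C n X = (case X of (A, \<alpha>) \<Rightarrow>
     (\<lambda>i. if i < n then A (Suc i) else sO C (A 1),
      \<lambda>i. if i < n then \<alpha> (Suc i)
           else if even n then sM C (\<alpha> 1) else mneg C (sM C (\<alpha> 1))))"

definition seq_mor :: "('o, 'm) catS \<Rightarrow> nat \<Rightarrow> ('o, 'm) nseq \<Rightarrow> ('o, 'm) nseq \<Rightarrow> (nat \<Rightarrow> 'm) \<Rightarrow> bool" where
  "seq_mor C n X Y \<phi> \<longleftrightarrow> (case X of (A, \<alpha>) \<Rightarrow> case Y of (B, \<beta>) \<Rightarrow>
     (\<forall>i\<in>{1..n}. \<phi> i \<in> hom C (A i) (B i)) \<and>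
     (\<forall>i\<in>{1..<n}. cmp C (\<beta> i) (\<phi> i) = cmp C (\<phi> (Suc i)) (\<alpha> i)) \<and>
     cmp C (\<beta> n) (\<phi> n) = cmp C (sM C (\<phi> 1)) (\<alpha> n))"

definition seq_iso :: "('o, 'm) catS \<Rightarrow> nat \<Rightarrow> ('o, 'm) nseq \<Rightarrow> ('o, 'm) nseq \<Rightarrow> bool" where
  "seq_iso C n X Y \<longleftrightarrow> (\<exists>\<phi>. seq_mor C n X Y \<phi> \<and>
     (\<forall>i\<in>{1..n}. is_iso C (fst X i) (fst Y i) (\<phi> i)))"

definition is_dsum :: "('o, 'm) catS \<Rightarrow> nat \<Rightarrow> ('o, 'm) nseq \<Rightarrow> ('o, 'm) nseq \<Rightarrow> ('o, 'm) nseq \<Rightarrow> bool" where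
  "is_dsum C n X Y S \<longleftrightarrow> (case X of (A, \<alpha>) \<Rightarrow> case Y of (B, \<beta>) \<Rightarrow> case S of (D, \<sigma>) \<Rightarrow>
     (\<exists>i1 i2 p1 p2 :: nat \<Rightarrow> 'm.
        (\<forall>i\<in>{1..n}. biprod C (A i) (B i) (D i) (i1 i) (i2 i) (p1 i) (p2 i)) \<and>
        (\<forall>i\<in>{1..<n}. \<sigma> i = madd C (cmp C (i1 (Suc i)) (cmp C (\<alpha> i) (p1 i)))
                                    (cmp C (i2 (Suc i)) (cmp C (\<beta> i) (p2 i)))) \<and>
        \<sigma> n = madd C (cmp C (sM C (i1 1)) (cmp C (\<alpha> n) (p1 n)))
                     (cmp C (sM C (i2 1)) (cmp C (\<beta> n) (p2 n)))))"

text \<open>Q is a mapping cone of the morphism phi : X \<rightarrow> Y (objects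
  A_(i+1) + B_i for i < n, Sigma A_1 + B_n, with the matrix maps of (N4);
  the last target is Sigma applied to the first biproduct).\<close>
definition is_cone :: "('o, 'm) catS \<Rightarrow> nat \<Rightarrow> ('o, 'm) nseq \<Rightarrow> ('o, 'm) nseq \<Rightarrow> (nat \<Rightarrow> 'm)
                       \<Rightarrow> ('o, 'm) nseq \<Rightarrow> bool" where
  "is_cone C n X Y \<phi> Q \<longleftrightarrow> (case X of (A, \<alpha>) \<Rightarrow> case Y of (B, \<beta>) \<Rightarrow> case Q of (D, \<gamma>) \<Rightarrow>
     (\<exists>i1 i2 p1 p2 :: nat \<Rightarrow> 'm.
        (\<forall>i\<in>{1..n}. biprod C (if i < n then A (Suc i) else sO C (A 1)) (B i) (D i)
                         (i1 i) (i2 i) (p1 i) (p2 i)) \<and>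
        (\<forall>i\<in>{1..<n}. \<gamma> i =
            madd C (madd C (cmp C (i1 (Suc i)) (cmp C (mneg C (\<alpha> (Suc i))) (p1 i)))
                           (cmp C (i2 (Suc i)) (cmp C (\<phi> (Suc i)) (p1 i))))
                   (cmp C (i2 (Suc i)) (cmp C (\<beta> i) (p2 i)))) \<and>
        \<gamma> n = madd C (madd C (cmp C (sM C (i1 1)) (cmp C (mneg C (sM C (\<alpha> 1))) (p1 n)))
                             (cmp C (sM C (i2 1)) (cmp C (sM C (\<phi> 1)) (p1 n))))
                     (cmp C (sM C (i2 1)) (cmp C (\<beta> n) (p2 n)))))"

definition nangulated :: "('o, 'm) catS \<Rightarrow> nat \<Rightarrow> ('o, 'm) nseq set \<Rightarrow> bool" where
  "nangulated C n N \<longleftrightarrow> additive C \<and> sigma_auto C \<and>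
     (\<forall>X\<in>N. is_nseq C n X) \<and>
     \<comment> \<open>(N1)(a)\<close>
     (\<forall>X\<in>N. \<forall>Y\<in>N. \<forall>S. is_nseq C n S \<longrightarrow> is_dsum C n X Y S \<longrightarrow> S \<in> N) \<and>
     (\<forall>S\<in>N. \<forall>X Y. is_nseq C n X \<longrightarrow> is_nseq C n Y \<longrightarrow> is_dsum C n X Y S \<longrightarrow> X \<in> N) \<and>
     (\<forall>X\<in>N. \<forall>Y. is_nseq C n Y \<longrightarrow> seq_iso C n X Y \<longrightarrow> Y \<in> N) \<and>
     \<comment> \<open>(N1)(b)\<close>
     (\<forall>A\<in>ob C. \<forall>Z. is_zero_obj C Z \<longrightarrow>
        ((\<lambda>i. if i = 1 \<or> i = 2 then A else Z),
         (\<lambda>i. if i = 1 then idm C A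
              else if i = 2 then mzero C A Z
              else if i < n then mzero C Z Z else mzero C Z (sO C A))) \<in> N) \<and>
     \<comment> \<open>(N1)(c)\<close>
     (\<forall>A1\<in>ob C. \<forall>A2\<in>ob C. \<forall>f\<in>hom C A1 A2.
        \<exists>X\<in>N. fst X 1 = A1 \<and> fst X 2 = A2 \<and> snd X 1 = f) \<and>
     \<comment> \<open>(N2)\<close>
     (\<forall>X. is_nseq C n X \<longrightarrow> (X \<in> N \<longleftrightarrow> lrot C n X \<in> N)) \<and>
     \<comment> \<open>(N3)\<close>
     (\<forall>X\<in>N. \<forall>Y\<in>N. \<forall>f1 f2.
        f1 \<in> hom C (fst X 1) (fst Y 1) \<longrightarrow> f2 \<in> hom C (fst X 2) (fst Y 2) \<longrightarrow>
        cmp C (snd Y 1) f1 = cmp C f2 (snd X 1) \<longrightarrow>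
        (\<exists>\<phi>. \<phi> 1 = f1 \<and> \<phi> 2 = f2 \<and> seq_mor C n X Y \<phi>)) \<and>
     \<comment> \<open>(N4)\<close>
     (\<forall>X\<in>N. \<forall>Y\<in>N. \<forall>f1 f2.
        f1 \<in> hom C (fst X 1) (fst Y 1) \<longrightarrow> f2 \<in> hom C (fst X 2) (fst Y 2) \<longrightarrow>
        cmp C (snd Y 1) f1 = cmp C f2 (snd X 1) \<longrightarrow>
        (\<exists>\<phi> Q. \<phi> 1 = f1 \<and> \<phi> 2 = f2 \<and> seq_mor C n X Y \<phi> \<and> is_cone C n X Y \<phi> Q \<and> Q \<in> N))"

definition isocls :: "('o, 'm) catS \<Rightarrow> 'o \<Rightarrow> 'o set" where
  "isocls C A = {B \<in> ob C. isomorphic C A B}"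

definition Fgrp :: "('o, 'm) catS \<Rightarrow> ('o set \<Rightarrow>\<^sub>0 int) monoid" where
  "Fgrp C = free_Abelian_group (isocls C ` ob C)"

definition gen :: "('o, 'm) catS \<Rightarrow> 'o \<Rightarrow> ('o set \<Rightarrow>\<^sub>0 int)" where
  "gen C A = Poly_Mapping.single (isocls C A) 1"

definition chi :: "('o, 'm) catS \<Rightarrow> nat \<Rightarrow> ('o, 'm) nseq \<Rightarrow> ('o set \<Rightarrow>\<^sub>0 int)" where
  "chi C n X = (\<Sum>i\<in>{1..n}. Poly_Mapping.single (isocls C (fst X i)) ((-1) ^ (i + 1)))"

definition Rgrp :: "('o, 'm) catS \<Rightarrow> nat \<Rightarrow> ('o, 'm) nseq set \<Rightarrow> ('o set \<Rightarrow>\<^sub>0 int) set" where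
  "Rgrp C n N = generate (Fgrp C)
     (chi C n ` N \<union> (if even n then {gen C Z | Z. is_zero_obj C Z} else {}))"

definition K0 :: "('o, 'm) catS \<Rightarrow> nat \<Rightarrow> ('o, 'm) nseq set \<Rightarrow> ('o set \<Rightarrow>\<^sub>0 int) set monoid" where
  "K0 C n N = Fgrp C Mod Rgrp C n N"

definition K0cls :: "('o, 'm) catS \<Rightarrow> nat \<Rightarrow> ('o, 'm) nseq set \<Rightarrow> 'o \<Rightarrow> ('o set \<Rightarrow>\<^sub>0 int) set" where
  "K0cls C n N A = Rgrp C n N #>\<^bsub>Fgrp C\<^esub> gen C A"

definition nang_functor :: "('o1, 'm1) catS \<Rightarrow> ('o2, 'm2) catS \<Rightarrow> nat \<Rightarrow>
    ('o1, 'm1) nseq set \<Rightarrow> ('o2, 'm2) nseq set \<Rightarrow> ('o1 \<Rightarrow> 'o2) \<Rightarrow> ('m1 \<Rightarrow> 'm2) \<Rightarrow> bool" where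
  "nang_functor D C n ND NC LO LM \<longleftrightarrow>
     (\<forall>A\<in>ob D. LO A \<in> ob C) \<and>
     (\<forall>A B f. f \<in> hom D A B \<longrightarrow> LM f \<in> hom C (LO A) (LO B)) \<and>
     (\<forall>A\<in>ob D. LM (idm D A) = idm C (LO A)) \<and>
     (\<forall>A B E f g. f \<in> hom D A B \<longrightarrow> g \<in> hom D B E \<longrightarrow> LM (cmp D g f) = cmp C (LM g) (LM f)) \<and>
     (\<forall>A B f g. f \<in> hom D A B \<longrightarrow> g \<in> hom D A B \<longrightarrow> LM (madd D f g) = madd C (LM f) (LM g)) \<and>
     (\<exists>\<eta>. (\<forall>A\<in>ob D. is_iso C (LO (sO D A)) (sO C (LO A)) (\<eta> A)) \<and>
          (\<forall>A B f. f \<in> hom D A B \<longrightarrow>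
              cmp C (\<eta> B) (LM (sM D f)) = cmp C (sM C (LM f)) (\<eta> A)) \<and>
          (\<forall>X\<in>ND. (LO \<circ> fst X,
                    \<lambda>i. if i = n then cmp C (\<eta> (fst X 1)) (LM (snd X n)) else LM (snd X i)) \<in> NC))"

definition fullsub :: "('o, 'm) catS \<Rightarrow> 'o set \<Rightarrow> ('o, 'm) catS" where
  "fullsub C S = C\<lparr>ob := S, hom := (\<lambda>A B. if A \<in> S \<and> B \<in> S then hom C A B else {})\<rparr>"

definition nang_subcat :: "('o, 'm) catS \<Rightarrow> nat \<Rightarrow> ('o, 'm) nseq set \<Rightarrow> 'o set \<Rightarrow> ('o, 'm) nseq set \<Rightarrow> bool" where
  "nang_subcat C n N S NS \<longleftrightarrow>
     S \<subseteq> ob C \<and>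
     (\<forall>A\<in>S. \<forall>B\<in>ob C. isomorphic C A B \<longrightarrow> B \<in> S) \<and>
     nangulated (fullsub C S) n NS \<and>
     nang_functor (fullsub C S) C n NS N id id"

definition dense_sub :: "('o, 'm) catS \<Rightarrow> 'o set \<Rightarrow> bool" where
  "dense_sub C S \<longleftrightarrow> (\<forall>X\<in>ob C. \<exists>B\<in>S. \<exists>Y i1 i2 p1 p2. biprod C X Y B i1 i2 p1 p2)"

definition complete_sub :: "('o, 'm) catS \<Rightarrow> nat \<Rightarrow> ('o, 'm) nseq set \<Rightarrow> 'o set \<Rightarrow> bool" where
  "complete_sub C n N S \<longleftrightarrow>
     (\<forall>X\<in>N. \<forall>j\<in>{1..n}. (\<forall>i\<in>{1..n} - {j}. fst X i \<in> S) \<longrightarrow> fst X j \<in> S)"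

end

theory Submission
  imports Defs
begin


locale nang =
  fixes C :: "('o,'m) catS" and n :: nat and N :: "('o,'m) nseq set"
  assumes n3: "n \<ge> 3" and nodd: "odd n" and NA: "nangulated C n N"
begin

lemmas NAs = NA[unfolded nangulated_def]
lemma addC: "additive C"
  using conjunct1[OF NAs] by blast
lemma preC: "preadditive C" using addC by (simp add: additive_def)
lemma catC: "category C" using preC by (simp add: preadditive_def)
lemma sigC: "sigma_auto C"
  using conjunct1[OF conjunct2[OF NAs]] by blast
lemma N_nseq: "X \<in> N \<Longrightarrow> is_nseq C n X"
  using conjunct1[OF conjunct2[OF conjunct2[OF NAs]]] by blast
lemma N_sum: "X \<in> N \<Longrightarrow> Y \<in> N \<Longrightarrow> is_nseq C n S \<Longrightarrow> is_dsum C n X Y S \<Longrightarrow> S \<in> N"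
  using conjunct1[OF conjunct2[OF conjunct2[OF conjunct2[OF NAs]]]] by blast
lemma N_summand: "S \<in> N \<Longrightarrow> is_nseq C n X \<Longrightarrow> is_nseq C n Y \<Longrightarrow> is_dsum C n X Y S \<Longrightarrow> X \<in> N"
  using conjunct1[OF conjunct2[OF conjunct2[OF conjunct2[OF conjunct2[OF NAs]]]]] by blast
lemma N_iso: "X \<in> N \<Longrightarrow> is_nseq C n Y \<Longrightarrow> seq_iso C n X Y \<Longrightarrow> Y \<in> N"
  using conjunct1[OF conjunct2[OF conjunct2[OF conjunct2[OF conjunct2[OF conjunct2[OF NAs]]]]]] by blast
lemma N_triv: "A \<in> ob C \<Longrightarrow> is_zero_obj C Z \<Longrightarrow>
        ((\<lambda>i. if i = 1 \<or> i = 2 then A else Z),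
         (\<lambda>i. if i = 1 then idm C A
              else if i = 2 then mzero C A Z
              else if i < n then mzero C Z Z else mzero C Z (sO C A))) \<in> N"
  using conjunct1[OF conjunct2[OF conjunct2[OF conjunct2[OF conjunct2[OF conjunct2[OF conjunct2[OF NAs]]]]]]] by blast
lemma N_ext: "A1 \<in> ob C \<Longrightarrow> A2 \<in> ob C \<Longrightarrow> f \<in> hom C A1 A2 \<Longrightarrow>
        \<exists>X\<in>N. fst X 1 = A1 \<and> fst X 2 = A2 \<and> snd X 1 = f"
  using conjunct1[OF conjunct2[OF conjunct2[OF conjunct2[OF conjunct2[OF conjunct2[OF conjunct2[OF conjunct2[OF NAs]]]]]]]] by blast
lemma N_rot: "is_nseq C n X \<Longrightarrow> (X \<in> N \<longleftrightarrow> lrot C n X \<in> N)"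
  using conjunct1[OF conjunct2[OF conjunct2[OF conjunct2[OF conjunct2[OF conjunct2[OF conjunct2[OF conjunct2[OF conjunct2[OF NAs]]]]]]]]] by blast
lemma N3: "X\<in>N \<Longrightarrow> Y\<in>N \<Longrightarrow>
        f1 \<in> hom C (fst X 1) (fst Y 1) \<Longrightarrow> f2 \<in> hom C (fst X 2) (fst Y 2) \<Longrightarrow>
        cmp C (snd Y 1) f1 = cmp C f2 (snd X 1) \<Longrightarrow>
        (\<exists>\<phi>. \<phi> 1 = f1 \<and> \<phi> 2 = f2 \<and> seq_mor C n X Y \<phi>)"
  using conjunct1[OF conjunct2[OF conjunct2[OF conjunct2[OF conjunct2[OF conjunct2[OF conjunct2[OF conjunct2[OF conjunct2[OF conjunct2[OF NAs]]]]]]]]]] by blast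
lemma N4: "X\<in>N \<Longrightarrow> Y\<in>N \<Longrightarrow>
        f1 \<in> hom C (fst X 1) (fst Y 1) \<Longrightarrow> f2 \<in> hom C (fst X 2) (fst Y 2) \<Longrightarrow>
        cmp C (snd Y 1) f1 = cmp C f2 (snd X 1) \<Longrightarrow>
        (\<exists>\<phi> Q. \<phi> 1 = f1 \<and> \<phi> 2 = f2 \<and> seq_mor C n X Y \<phi> \<and> is_cone C n X Y \<phi> Q \<and> Q \<in> N)"
  using conjunct2[OF conjunct2[OF conjunct2[OF conjunct2[OF conjunct2[OF conjunct2[OF conjunct2[OF conjunct2[OF conjunct2[OF conjunct2[OF NAs]]]]]]]]]] by blast

lemmas catCs = catC[unfolded category_def]
lemmas preCs = preC[unfolded preadditive_def]
lemma hom_ob: "f \<in> hom C A B \<Longrightarrow> A \<in> ob C \<and> B \<in> ob C"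
proof -
  assume f: "f \<in> hom C A B"
  have "\<forall>A B. A \<notin> ob C \<or> B \<notin> ob C \<longrightarrow> catS.hom C A B = {}" using conjunct1[OF catCs] .
  then show ?thesis using f by blast
qed
lemma hom_uniq: "f \<in> hom C A B \<Longrightarrow> f \<in> hom C A' B' \<Longrightarrow> A = A' \<and> B = B'"
proof -
  assume f: "f \<in> hom C A B" "f \<in> hom C A' B'"
  have "\<forall>A\<in>ob C. \<forall>B\<in>ob C. \<forall>A'\<in>ob C. \<forall>B'\<in>ob C. \<forall>f.
        f \<in> hom C A B \<longrightarrow> f \<in> hom C A' B' \<longrightarrow> A = A' \<and> B = B'" using conjunct1[OF conjunct2[OF catCs]] .
  then show ?thesis using f hom_ob[OF f(1)] hom_ob[OF f(2)] by blast
qed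
lemma id_hom: "A \<in> ob C \<Longrightarrow> idm C A \<in> hom C A A"
  using conjunct1[OF conjunct2[OF conjunct2[OF catCs]]] by blast
lemma cmp_hom: "f \<in> hom C A B \<Longrightarrow> g \<in> hom C B D \<Longrightarrow> cmp C g f \<in> hom C A D"
  using conjunct1[OF conjunct2[OF conjunct2[OF conjunct2[OF catCs]]]] by blast
lemma id_l: "f \<in> hom C A B \<Longrightarrow> cmp C (idm C B) f = f"
  using conjunct1[OF conjunct2[OF conjunct2[OF conjunct2[OF conjunct2[OF catCs]]]]] by blast
lemma id_r: "f \<in> hom C A B \<Longrightarrow> cmp C f (idm C A) = f"
  using conjunct1[OF conjunct2[OF conjunct2[OF conjunct2[OF conjunct2[OF catCs]]]]] by blast
lemma assoc: "f \<in> hom C A B \<Longrightarrow> g \<in> hom C B D \<Longrightarrow> h \<in> hom C D E \<Longrightarrow>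
        cmp C h (cmp C g f) = cmp C (cmp C h g) f"
  using conjunct2[OF conjunct2[OF conjunct2[OF conjunct2[OF conjunct2[OF catCs]]]]] by blast
lemma grp: "A \<in> ob C \<Longrightarrow> B \<in> ob C \<Longrightarrow> comm_group (homgrp C A B)"
  using conjunct1[OF conjunct2[OF preCs]] by blast
lemma distl: "f \<in> hom C A B \<Longrightarrow> g \<in> hom C A B \<Longrightarrow> h \<in> hom C B D \<Longrightarrow>
        cmp C h (madd C f g) = madd C (cmp C h f) (cmp C h g)"
  using conjunct1[OF conjunct2[OF conjunct2[OF preCs]]] by blast
lemma distr: "h \<in> hom C A B \<Longrightarrow> f \<in> hom C B D \<Longrightarrow> g \<in> hom C B D \<Longrightarrow>
        cmp C (madd C f g) h = madd C (cmp C f h) (cmp C g h)"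
  using conjunct2[OF conjunct2[OF conjunct2[OF preCs]]] by blast

lemma homgrp_simps: "carrier (homgrp C A B) = hom C A B" "monoid.mult (homgrp C A B) = madd C"
   "one (homgrp C A B) = mzero C A B"
  by (simp_all add: homgrp_def)

lemma mzero_hom: "A \<in> ob C \<Longrightarrow> B \<in> ob C \<Longrightarrow> mzero C A B \<in> hom C A B"
  using comm_group.axioms(2)[OF grp, THEN group.is_monoid, THEN monoid.one_closed] homgrp_simps by metis
lemma madd_hom: "f \<in> hom C A B \<Longrightarrow> g \<in> hom C A B \<Longrightarrow> madd C f g \<in> hom C A B"
  using comm_group.axioms(2)[OF grp, THEN group.is_monoid, THEN monoid.m_closed] homgrp_simps hom_ob
  by metis
lemma madd_zr: "f \<in> hom C A B \<Longrightarrow> madd C f (mzero C A B) = f"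
  using comm_group.axioms(2)[OF grp, THEN group.is_monoid, THEN monoid.r_one] homgrp_simps hom_ob
  by metis
lemma madd_zl: "f \<in> hom C A B \<Longrightarrow> madd C (mzero C A B) f = f"
  using comm_group.axioms(2)[OF grp, THEN group.is_monoid, THEN monoid.l_one] homgrp_simps hom_ob
  by metis
lemma madd_idem: "f \<in> hom C A B \<Longrightarrow> madd C f f = f \<Longrightarrow> f = mzero C A B"
proof -
  assume f: "f \<in> hom C A B" and e: "madd C f f = f"
  have G: "group (homgrp C A B)" using grp hom_ob[OF f] comm_group.axioms(2) by blast
  show ?thesis using group.l_cancel_one[OF G, of f f] e f hom_ob[OF f] by (simp add: homgrp_simps)
qed

lemma mneg_prop: "f \<in> hom C A B \<Longrightarrow> mneg C f \<in> hom C A B \<and> madd C f (mneg C f) = mzero C A B"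
proof -
  assume f: "f \<in> hom C A B"
  have ob: "A \<in> ob C" "B \<in> ob C" using hom_ob[OF f] by auto
  have G: "group (homgrp C A B)" using grp ob comm_group.axioms(2) by blast
  have "\<exists>g. g \<in> hom C A B \<and> madd C f g = mzero C A B"
    using group.r_inv[OF G, of f] group.inv_closed[OF G, of f] f by (auto simp: homgrp_simps)
  then have ex: "\<exists>g. \<exists>A'\<in>ob C. \<exists>B'\<in>ob C. f \<in> hom C A' B' \<and> g \<in> hom C A' B' \<and> madd C f g = mzero C A' B'"
    using ob f by blast
  obtain A' B' where AB: "A' \<in> ob C" "B' \<in> ob C" "f \<in> hom C A' B'" "mneg C f \<in> hom C A' B'"
    "madd C f (mneg C f) = mzero C A' B'"
    using someI_ex[OF ex] unfolding mneg_def by blast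
  have "A' = A" "B' = B" using hom_uniq[OF f AB(3)] by auto
  then show ?thesis using AB by simp
qed

lemma zero_unique_from: "is_zero_obj C Z \<Longrightarrow> f \<in> hom C Z A \<Longrightarrow> g \<in> hom C Z A \<Longrightarrow> f = g"
  unfolding is_zero_obj_def using hom_ob by blast
lemma zero_unique_to: "is_zero_obj C Z \<Longrightarrow> f \<in> hom C A Z \<Longrightarrow> g \<in> hom C A Z \<Longrightarrow> f = g"
  unfolding is_zero_obj_def using hom_ob by blast

lemma comp_zero: assumes Z: "is_zero_obj C Z" and f: "f \<in> hom C A Z" and g: "g \<in> hom C Z B"
  shows "cmp C g f = mzero C A B"
proof -
  have ob: "A \<in> ob C" "B \<in> ob C" "Z \<in> ob C" using hom_ob f g by auto
  have g0: "g = mzero C Z B" using zero_unique_from[OF Z g mzero_hom] ob by auto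
  have "madd C g g = g" using g0 madd_zr mzero_hom ob by simp
  then have "cmp C g f = madd C (cmp C g f) (cmp C g f)"
    using distr[OF f g g] by simp
  then show ?thesis using madd_idem[OF cmp_hom[OF f g]] by simp
qed

end


context nang begin

abbreviation "F \<equiv> Fgrp C"
abbreviation "R \<equiv> Rgrp C n N"

lemma F_comm: "comm_group F" unfolding Fgrp_def by (rule abelian_free_Abelian_group)
lemma F_grp: "group F" unfolding Fgrp_def by simp
lemma F_carr: "a \<in> carrier F \<longleftrightarrow> Poly_Mapping.keys a \<subseteq> isocls C ` ob C"
  unfolding Fgrp_def by simp
lemma F_mult: "a \<otimes>\<^bsub>F\<^esub> b = a + b" unfolding Fgrp_def by simp
lemma F_one: "\<one>\<^bsub>F\<^esub> = 0" unfolding Fgrp_def by simp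
lemma F_inv: "a \<in> carrier F \<Longrightarrow> inv\<^bsub>F\<^esub> a = - a" unfolding Fgrp_def by simp

lemma single_carr: "A \<in> ob C \<Longrightarrow> Poly_Mapping.single (isocls C A) k \<in> carrier F"
  unfolding F_carr by simp

lemma gen_carr: "A \<in> ob C \<Longrightarrow> gen C A \<in> carrier F"
  unfolding gen_def by (rule single_carr)

lemma chi_carr: "is_nseq C n X \<Longrightarrow> chi C n X \<in> carrier F"
  unfolding chi_def Fgrp_def
  apply (rule sum_closed_free_Abelian_group)
  apply (cases X) apply (simp add: is_nseq_def)
  done

lemma R_gens: "chi C n ` N \<union> (if even n then {gen C Z | Z. is_zero_obj C Z} else {}) = chi C n ` N"
  using nodd by simp

lemma R_sub: "subgroup R F"
  unfolding Rgrp_def R_gens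
  by (rule group.generate_is_subgroup[OF F_grp]) (use chi_carr N_nseq in blast)

lemma chi_R: "X \<in> N \<Longrightarrow> chi C n X \<in> R"
  unfolding Rgrp_def R_gens by (rule generate.incl) blast

lemma R_normal: "R \<lhd> F"
  using comm_group.subgroup_imp_normal[OF F_comm R_sub] .

lemma sg_carr: "subgroup G F \<Longrightarrow> a \<in> G \<Longrightarrow> a \<in> carrier F"
  using subgroup.subset by blast
lemma sg_zero: "subgroup G F \<Longrightarrow> 0 \<in> G"
  using subgroup.one_closed F_one by metis
lemma sg_add: "subgroup G F \<Longrightarrow> a \<in> G \<Longrightarrow> b \<in> G \<Longrightarrow> a + b \<in> G"
  using subgroup.m_closed F_mult by metis
lemma sg_neg: "subgroup G F \<Longrightarrow> a \<in> G \<Longrightarrow> - a \<in> G"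
  using subgroup.m_inv_closed F_inv sg_carr by metis
lemma sg_diff: "subgroup G F \<Longrightarrow> a \<in> G \<Longrightarrow> b \<in> G \<Longrightarrow> a - b \<in> G"
  using sg_add[of G a "- b"] sg_neg by simp
lemma sg_sum: assumes G: "subgroup G F" and fin: "finite I" shows "(\<And>i. i \<in> I \<Longrightarrow> f i \<in> G) \<Longrightarrow> sum f I \<in> G"
  using fin
proof (induction I rule: finite_induct)
  case empty then show ?case using sg_zero[OF G] by simp
next
  case (insert x I) then show ?case using sg_add[OF G] by simp
qed

lemma sg_single: assumes G: "subgroup G F" and g: "gen C A \<in> G" and k: "k = 1 \<or> k = -1"
  shows "Poly_Mapping.single (isocls C A) k \<in> G"
  using k
proof
  assume "k = 1" then show ?thesis using g by (simp add: gen_def)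
next
  assume "k = -1" then show ?thesis using sg_neg[OF G g] by (simp add: gen_def single_uminus)
qed

lemma sg_single_inv: assumes G: "subgroup G F" and g: "Poly_Mapping.single (isocls C A) k \<in> G"
   and k: "k = 1 \<or> k = -1"
  shows "gen C A \<in> G"
  using k
proof
  assume "k = 1" then show ?thesis using g by (simp add: gen_def)
next
  assume "k = -1" then show ?thesis using sg_neg[OF G g] by (simp add: gen_def single_uminus)
qed

lemma sign: "(-1::int) ^ (i+1) = 1 \<or> (-1::int) ^ (i+1) = -1"
  by (cases "even i") auto

lemma chi_partial:
  assumes G: "subgroup G F" and cG: "chi C n X \<in> G" and J: "J \<subseteq> {1..n}"
    and rest: "\<And>i. i \<in> {1..n} - J \<Longrightarrow> gen C (fst X i) \<in> G"
  shows "(\<Sum>i\<in>J. Poly_Mapping.single (isocls C (fst X i)) ((-1) ^ (i + 1))) \<in> G"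
proof -
  let ?f = "\<lambda>i. Poly_Mapping.single (isocls C (fst X i)) ((-1::int) ^ (i + 1))"
  have split: "chi C n X = sum ?f ({1..n} - J) + sum ?f J"
    unfolding chi_def by (rule sum.subset_diff[OF J finite_atLeastAtMost])
  have "sum ?f ({1..n} - J) \<in> G"
  proof (rule sg_sum[OF G])
    show "finite ({1..n} - J)" by simp
    fix i assume "i \<in> {1..n} - J"
    then show "?f i \<in> G" by (rule sg_single[OF G rest sign])
  qed
  then have "chi C n X - sum ?f ({1..n} - J) \<in> G" using sg_diff[OF G cG] by blast
  then show ?thesis using split by simp
qed

lemma chi_single:
  assumes G: "subgroup G F" and cG: "chi C n X \<in> G" and j: "j \<in> {1..n}"
    and rest: "\<And>i. i \<in> {1..n} - {j} \<Longrightarrow> gen C (fst X i) \<in> G"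
  shows "gen C (fst X j) \<in> G"
  using chi_partial[OF G cG _ rest, of "{j}"] j sg_single_inv[OF G _ sign] by simp

end


locale nangH = nang C n N for C :: "('o,'m) catS" and n N +
  fixes H :: "('o set \<Rightarrow>\<^sub>0 int) set set"
  assumes Hsub: "subgroup H (K0 C n N)"
begin

definition Hp :: "('o set \<Rightarrow>\<^sub>0 int) set" where
  "Hp = {a \<in> carrier F. R #>\<^bsub>F\<^esub> a \<in> H}"

lemma K0_grp: "group (K0 C n N)"
  unfolding K0_def by (rule normal.factorgroup_is_group[OF R_normal])

lemma pi_hom: "group_hom F (K0 C n N) (\<lambda>a. R #>\<^bsub>F\<^esub> a)"
  unfolding group_hom_def group_hom_axioms_def
  using F_grp K0_grp normal.r_coset_hom_Mod[OF R_normal] unfolding K0_def by blast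

lemma Hp_sub: "subgroup Hp F"
proof (rule group.subgroupI[OF F_grp])
  show "Hp \<subseteq> carrier F" unfolding Hp_def by blast
  have "\<one>\<^bsub>F\<^esub> \<in> Hp" unfolding Hp_def
    using group_hom.hom_one[OF pi_hom] subgroup.one_closed[OF Hsub] monoid.one_closed[OF group.is_monoid[OF F_grp]] by simp
  then show "Hp \<noteq> {}" by blast
next
  fix a assume a: "a \<in> Hp"
  then show "inv\<^bsub>F\<^esub> a \<in> Hp" unfolding Hp_def
    using group_hom.hom_inv[OF pi_hom] subgroup.m_inv_closed[OF Hsub] group.inv_closed[OF F_grp] by simp
next
  fix a b assume "a \<in> Hp" "b \<in> Hp"
  then show "a \<otimes>\<^bsub>F\<^esub> b \<in> Hp" unfolding Hp_def
    using group_hom.hom_mult[OF pi_hom] subgroup.m_closed[OF Hsub] monoid.m_closed[OF group.is_monoid[OF F_grp]] by simp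
qed

lemma R_Hp: "R \<subseteq> Hp"
proof
  fix a assume a: "a \<in> R"
  have "R #>\<^bsub>F\<^esub> a = R" using subgroup.rcos_const[OF R_sub F_grp a] .
  moreover have "R = \<one>\<^bsub>K0 C n N\<^esub>" unfolding K0_def by simp
  ultimately show "a \<in> Hp" unfolding Hp_def
    using subgroup.one_closed[OF Hsub] subgroup.subset[OF R_sub] a by auto
qed

abbreviation "S \<equiv> {A \<in> ob C. K0cls C n N A \<in> H}"

lemma S_iff: "A \<in> S \<longleftrightarrow> A \<in> ob C \<and> gen C A \<in> Hp"
  unfolding Hp_def K0cls_def using gen_carr by auto

lemma chi_Hp: "X \<in> N \<Longrightarrow> chi C n X \<in> Hp" using chi_R R_Hp by blast

end


context nang begin

lemmas sigCs = sigC[unfolded sigma_auto_def]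
lemma sO_bij: "bij_betw (sO C) (ob C) (ob C)" using conjunct1[OF sigCs] .
lemma sO_ob: "A \<in> ob C \<Longrightarrow> sO C A \<in> ob C"
  using bij_betw_apply[OF sO_bij] .
lemma sO_surj: "B \<in> ob C \<Longrightarrow> \<exists>A\<in>ob C. sO C A = B"
  using bij_betw_imp_surj_on[OF sO_bij] by (metis imageE)
lemma sO_inj: "A \<in> ob C \<Longrightarrow> B \<in> ob C \<Longrightarrow> sO C A = sO C B \<Longrightarrow> A = B"
  using bij_betw_imp_inj_on[OF sO_bij] unfolding inj_on_def by blast
lemma sM_bij: "A \<in> ob C \<Longrightarrow> B \<in> ob C \<Longrightarrow> bij_betw (sM C) (hom C A B) (hom C (sO C A) (sO C B))"
  using conjunct1[OF conjunct2[OF sigCs]] by blast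
lemma sM_id: "A \<in> ob C \<Longrightarrow> sM C (idm C A) = idm C (sO C A)"
  using conjunct1[OF conjunct2[OF conjunct2[OF sigCs]]] by blast
lemma sM_cmp: "f \<in> hom C A B \<Longrightarrow> g \<in> hom C B D \<Longrightarrow> sM C (cmp C g f) = cmp C (sM C g) (sM C f)"
  using conjunct2[OF conjunct2[OF conjunct2[OF sigCs]]] by blast
lemma sM_hom: "f \<in> hom C A B \<Longrightarrow> sM C f \<in> hom C (sO C A) (sO C B)"
  using bij_betw_apply[OF sM_bij] hom_ob by blast

lemma zero_ob: "is_zero_obj C Z \<Longrightarrow> Z \<in> ob C" unfolding is_zero_obj_def by blast

lemma zero_eq: "f \<in> hom C A B \<Longrightarrow> g \<in> hom C A B \<Longrightarrow> is_zero_obj C A \<or> is_zero_obj C B \<Longrightarrow> f = g"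
  using zero_unique_from zero_unique_to by blast

lemma sO_zero: assumes Z: "is_zero_obj C Z" shows "is_zero_obj C (sO C Z)"
proof -
  have Zo: "Z \<in> ob C" using zero_ob[OF Z] .
  have h1: "\<exists>!f. f \<in> hom C (sO C Z) B" if B: "B \<in> ob C" for B
  proof -
    obtain A where A: "A \<in> ob C" "sO C A = B" using sO_surj[OF B] by blast
    have bij: "sM C ` hom C Z A = hom C (sO C Z) (sO C A)"
      using bij_betw_imp_surj_on[OF sM_bij[OF Zo A(1)]] .
    obtain u where u: "u \<in> hom C Z A" using Z A(1) unfolding is_zero_obj_def by blast
    have hu: "hom C Z A = {u}"
    proof (intro equalityI subsetI)
      fix f assume "f \<in> hom C Z A" then show "f \<in> {u}" using zero_unique_from[OF Z _ u] by simp
    next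
      fix f assume "f \<in> {u}" then show "f \<in> hom C Z A" using u by simp
    qed
    have "hom C (sO C Z) B = {sM C u}" using bij hu A(2) by simp
    then show ?thesis by simp
  qed
  have h2: "\<exists>!f. f \<in> hom C B (sO C Z)" if B: "B \<in> ob C" for B
  proof -
    obtain A where A: "A \<in> ob C" "sO C A = B" using sO_surj[OF B] by blast
    have bij: "sM C ` hom C A Z = hom C (sO C A) (sO C Z)"
      using bij_betw_imp_surj_on[OF sM_bij[OF A(1) Zo]] .
    obtain u where u: "u \<in> hom C A Z" using Z A(1) unfolding is_zero_obj_def by blast
    have hu: "hom C A Z = {u}"
    proof (intro equalityI subsetI)
      fix f assume "f \<in> hom C A Z" then show "f \<in> {u}" using zero_unique_to[OF Z _ u] by simp
    next
      fix f assume "f \<in> {u}" then show "f \<in> hom C A Z" using u by simp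
    qed
    have "hom C B (sO C Z) = {sM C u}" using bij hu A(2) by simp
    then show ?thesis by simp
  qed
  show ?thesis unfolding is_zero_obj_def
  proof (intro conjI ballI)
    show "sO C Z \<in> ob C" using sO_ob[OF Zo] .
  next
    fix B assume "B \<in> ob C" then show "\<exists>!f. f \<in> hom C (sO C Z) B" by (rule h1)
  next
    fix B assume "B \<in> ob C" then show "\<exists>!f. f \<in> hom C B (sO C Z)" by (rule h2)
  qed
qed

definition Z0 :: 'o where "Z0 = (SOME Z. is_zero_obj C Z)"
lemma Z0: "is_zero_obj C Z0"
  unfolding Z0_def using addC unfolding additive_def by (metis someI_ex)
lemma Z0_ob: "Z0 \<in> ob C" using zero_ob[OF Z0] .
lemma sZ0: "is_zero_obj C (sO C Z0)" using sO_zero[OF Z0] .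

lemma nseq_pair: "is_nseq C n (A, \<alpha>) \<longleftrightarrow>
     (\<forall>i\<in>{1..n}. A i \<in> ob C) \<and>
     (\<forall>i\<in>{1..<n}. \<alpha> i \<in> hom C (A i) (A (Suc i))) \<and>
     \<alpha> n \<in> hom C (A n) (sO C (A 1))"
  unfolding is_nseq_def by simp

lemma lrot_pair: "lrot C n (A, \<alpha>) = (\<lambda>i. if i < n then A (Suc i) else sO C (A 1),
      \<lambda>i. if i < n then \<alpha> (Suc i) else mneg C (sM C (\<alpha> 1)))"
  unfolding lrot_def using nodd by simp

lemma lrot_nseq: assumes X: "is_nseq C n (A, \<alpha>)" shows "is_nseq C n (lrot C n (A, \<alpha>))"
proof -
  have ob: "\<And>i. i \<in> {1..n} \<Longrightarrow> A i \<in> ob C" and mp: "\<And>i. i \<in> {1..<n} \<Longrightarrow> \<alpha> i \<in> hom C (A i) (A (Suc i))"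
    and last: "\<alpha> n \<in> hom C (A n) (sO C (A 1))" using X unfolding nseq_pair by auto
  have a1: "\<alpha> 1 \<in> hom C (A 1) (A 2)" using mp[of 1] n3 by (simp add: numeral_2_eq_2)
  show ?thesis unfolding lrot_pair nseq_pair
  proof (intro conjI ballI)
    fix i assume i: "i \<in> {1..n}"
    show "(if i < n then A (Suc i) else sO C (A 1)) \<in> ob C"
      using ob i sO_ob[OF ob[of 1]] n3 by auto
  next
    fix i assume i: "i \<in> {1..<n}"
    show "(if i < n then \<alpha> (Suc i) else mneg C (sM C (\<alpha> 1)))
          \<in> hom C (if i < n then A (Suc i) else sO C (A 1))
                   (if Suc i < n then A (Suc (Suc i)) else sO C (A 1))"
    proof (cases "Suc i < n")
      case True then show ?thesis using i mp[of "Suc i"] by auto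
    next
      case False then have "Suc i = n" using i by auto
      then show ?thesis using i last by auto
    qed
  next
    show "(if n < n then \<alpha> (Suc n) else mneg C (sM C (\<alpha> 1)))
      \<in> hom C (if n < n then A (Suc n) else sO C (A 1))
           (sO C (if 1 < n then A (Suc 1) else sO C (A 1)))"
      using mneg_prop[OF sM_hom[OF a1]] n3 by (simp add: numeral_2_eq_2)
  qed
qed

definition Pobj :: "nat \<Rightarrow> 'o \<Rightarrow> nat \<Rightarrow> 'o" where
  "Pobj k B i = (if i = k \<or> i = Suc k then B else Z0)"
definition Pmap :: "nat \<Rightarrow> 'o \<Rightarrow> nat \<Rightarrow> 'm" where
  "Pmap k B i = (if i = k then idm C B else if i < n then mzero C (Pobj k B i) (if i = 0 then Z0 else Pobj k B (Suc i))
                 else mzero C (Pobj k B n) (sO C (Pobj k B 1)))"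

lemma Pobj_ob: "B \<in> ob C \<Longrightarrow> Pobj k B i \<in> ob C"
  unfolding Pobj_def using Z0_ob by auto

lemma P_nseq: assumes B: "B \<in> ob C" and k: "1 \<le> k" "k < n"
  shows "is_nseq C n (Pobj k B, Pmap k B)"
  unfolding nseq_pair
proof (intro conjI ballI)
  fix i show "Pobj k B i \<in> ob C" using Pobj_ob[OF B] .
next
  fix i assume i: "i \<in> {1..<n}"
  show "Pmap k B i \<in> hom C (Pobj k B i) (Pobj k B (Suc i))"
  proof (cases "i = k")
    case True then show ?thesis using id_hom[OF B] by (simp add: Pmap_def Pobj_def)
  next
    case False then show ?thesis using i mzero_hom Pobj_ob[OF B] by (simp add: Pmap_def)
  qed
next
  show "Pmap k B n \<in> hom C (Pobj k B n) (sO C (Pobj k B 1))"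
    using k mzero_hom Pobj_ob[OF B] sO_ob[OF Pobj_ob[OF B]] by (simp add: Pmap_def)
qed

lemma P1_eq: "(Pobj 1 A, Pmap 1 A) =
        ((\<lambda>i. if i = 1 \<or> i = 2 then A else Z0),
         (\<lambda>i. if i = 1 then idm C A
              else if i = 2 then mzero C A Z0
              else if i < n then mzero C Z0 Z0 else mzero C Z0 (sO C A)))"
proof -
  have o: "Pobj 1 A = (\<lambda>i. if i = 1 \<or> i = 2 then A else Z0)"
    by (auto simp: Pobj_def fun_eq_iff numeral_2_eq_2)
  have m: "Pmap 1 A = (\<lambda>i. if i = 1 then idm C A
              else if i = 2 then mzero C A Z0
              else if i < n then mzero C Z0 Z0 else mzero C Z0 (sO C A))"
  proof (rule ext)
    fix i show "Pmap 1 A i = (if i = 1 then idm C A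
              else if i = 2 then mzero C A Z0
              else if i < n then mzero C Z0 Z0 else mzero C Z0 (sO C A))"
      using n3 by (cases "i = 0") (auto simp: Pmap_def Pobj_def numeral_2_eq_2)
  qed
  show ?thesis using o m by simp
qed

lemma P1_N: "A \<in> ob C \<Longrightarrow> (Pobj 1 A, Pmap 1 A) \<in> N"
  unfolding P1_eq using N_triv[OF _ Z0] by blast


lemma id_iso: "A \<in> ob C \<Longrightarrow> is_iso C A A (idm C A)"
  unfolding is_iso_def using id_hom id_l by blast

lemma zero_iso: assumes Z: "is_zero_obj C Z" and Z': "is_zero_obj C Z'"
  shows "is_iso C Z Z' (mzero C Z Z')"
proof -
  have o: "Z \<in> ob C" "Z' \<in> ob C" using zero_ob Z Z' by auto
  have h1: "mzero C Z Z' \<in> hom C Z Z'" and h2: "mzero C Z' Z \<in> hom C Z' Z" using mzero_hom o by auto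
  have "cmp C (mzero C Z' Z) (mzero C Z Z') = idm C Z"
    using zero_eq[OF cmp_hom[OF h1 h2] id_hom[OF o(1)]] Z by blast
  moreover have "cmp C (mzero C Z Z') (mzero C Z' Z) = idm C Z'"
    using zero_eq[OF cmp_hom[OF h2 h1] id_hom[OF o(2)]] Z' by blast
  ultimately show ?thesis unfolding is_iso_def using h1 h2 by blast
qed

lemma seq_iso_pairI:
  assumes "\<And>i. i \<in> {1..n} \<Longrightarrow> is_iso C (A i) (B i) (\<phi> i)"
    and "\<And>i. i \<in> {1..<n} \<Longrightarrow> cmp C (\<beta> i) (\<phi> i) = cmp C (\<phi> (Suc i)) (\<alpha> i)"
    and "cmp C (\<beta> n) (\<phi> n) = cmp C (sM C (\<phi> 1)) (\<alpha> n)"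
  shows "seq_iso C n (A, \<alpha>) (B, \<beta>)"
  unfolding seq_iso_def seq_mor_def using assms unfolding is_iso_def by (intro exI[of _ \<phi>]) auto

lemma P_step: assumes B: "B \<in> ob C" and k: "1 \<le> k" "Suc k < n"
  and PN: "(Pobj k B, Pmap k B) \<in> N"
  shows "(Pobj (Suc k) B, Pmap (Suc k) B) \<in> N"
proof -
  have nsP: "is_nseq C n (Pobj (Suc k) B, Pmap (Suc k) B)" using P_nseq[OF B] k by auto
  have nsPk: "is_nseq C n (Pobj k B, Pmap k B)" using P_nseq[OF B] k by auto
  define YA where "YA = (\<lambda>i. if i < n then Pobj (Suc k) B (Suc i) else sO C (Pobj (Suc k) B 1))"
  define Ya where "Ya = (\<lambda>i. if i < n then Pmap (Suc k) B (Suc i) else mneg C (sM C (Pmap (Suc k) B 1)))"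
  have Y: "lrot C n (Pobj (Suc k) B, Pmap (Suc k) B) = (YA, Ya)" unfolding lrot_pair YA_def Ya_def ..
  have nsY: "is_nseq C n (YA, Ya)" using lrot_nseq[OF nsP] Y by simp
  have YAl: "i < n \<Longrightarrow> YA i = Pobj k B i" for i unfolding YA_def Pobj_def by auto
  have YAn: "YA n = sO C Z0" unfolding YA_def Pobj_def using k by auto
  have Yak: "Ya k = idm C B" unfolding Ya_def Pmap_def using k by auto
  have Pkn: "Pobj k B n = Z0" unfolding Pobj_def using k by auto
  define \<phi> where "\<phi> = (\<lambda>i. if i = n then mzero C Z0 (sO C Z0) else idm C (Pobj k B i))"
  have iso: "is_iso C (Pobj k B i) (YA i) (\<phi> i)" if i: "i \<in> {1..n}" for i
  proof (cases "i = n")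
    case True then show ?thesis using zero_iso[OF Z0 sZ0] YAn Pkn \<phi>_def by simp
  next
    case False then have "i < n" using i by auto
    then show ?thesis using id_iso[OF Pobj_ob[OF B]] YAl \<phi>_def False by simp
  qed
  have isoh: "\<phi> i \<in> hom C (Pobj k B i) (YA i)" if i: "i \<in> {1..n}" for i
    using iso[OF i] unfolding is_iso_def by blast
  have Pm: "Pmap k B i \<in> hom C (Pobj k B i) (Pobj k B (Suc i))" if "i \<in> {1..<n}" for i
    using nsPk that unfolding nseq_pair by blast
  have Ym: "Ya i \<in> hom C (YA i) (YA (Suc i))" if "i \<in> {1..<n}" for i
    using nsY that unfolding nseq_pair by blast
  have sq: "cmp C (Ya i) (\<phi> i) = cmp C (\<phi> (Suc i)) (Pmap k B i)" if i: "i \<in> {1..<n}" for i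
  proof (cases "i = k")
    case True
    have "Suc k \<noteq> n" using k by simp
    then show ?thesis using True Yak \<phi>_def k by (simp add: Pmap_def Pobj_def)
  next
    case False
    have l: "cmp C (Ya i) (\<phi> i) \<in> hom C (Pobj k B i) (YA (Suc i))"
      using cmp_hom[OF isoh Ym] i by auto
    have r: "cmp C (\<phi> (Suc i)) (Pmap k B i) \<in> hom C (Pobj k B i) (YA (Suc i))"
      using cmp_hom[OF Pm isoh] i by auto
    have z: "is_zero_obj C (Pobj k B i) \<or> is_zero_obj C (YA (Suc i))"
    proof (cases "i = Suc k")
      case True
      show ?thesis
      proof (cases "Suc i < n")
        case True2: True
        then have "YA (Suc i) = Z0" using YAl[of "Suc i"] True by (simp add: Pobj_def)
        then show ?thesis using Z0 by simp
      next
        case False2: False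
        then have "Suc i = n" using i by auto
        then show ?thesis using YAn sZ0 by simp
      qed
    next
      case False3: False
      then have "Pobj k B i = Z0" using False by (simp add: Pobj_def)
      then show ?thesis using Z0 by simp
    qed
    show ?thesis using zero_eq[OF l r z] .
  qed
  have Pkn_m: "Pmap k B n \<in> hom C (Pobj k B n) (sO C (Pobj k B 1))"
    using nsPk unfolding nseq_pair by blast
  have Yn: "Ya n \<in> hom C (YA n) (sO C (YA 1))" using nsY unfolding nseq_pair by blast
  have n1: "1 \<in> {1..n}" "n \<in> {1..n}" using n3 by auto
  have sqn: "cmp C (Ya n) (\<phi> n) = cmp C (sM C (\<phi> 1)) (Pmap k B n)"
  proof (rule zero_eq)
    show "cmp C (Ya n) (\<phi> n) \<in> hom C (Pobj k B n) (sO C (YA 1))" using cmp_hom[OF isoh[OF n1(2)] Yn] .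
    show "cmp C (sM C (\<phi> 1)) (Pmap k B n) \<in> hom C (Pobj k B n) (sO C (YA 1))"
      using cmp_hom[OF Pkn_m sM_hom[OF isoh[OF n1(1)]]] .
    show "is_zero_obj C (Pobj k B n) \<or> is_zero_obj C (sO C (YA 1))" using Pkn Z0 by simp
  qed
  have "seq_iso C n (Pobj k B, Pmap k B) (YA, Ya)"
    by (rule seq_iso_pairI[OF iso sq sqn])
  then have "(YA, Ya) \<in> N" using N_iso[OF PN nsY] by blast
  then show ?thesis using N_rot[OF nsP] Y by simp
qed

lemma P_N: assumes B: "B \<in> ob C" shows "1 \<le> k \<Longrightarrow> k < n \<Longrightarrow> (Pobj k B, Pmap k B) \<in> N"
proof (induction k)
  case 0 then show ?case by simp
next
  case (Suc k)
  show ?case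
  proof (cases "k = 0")
    case True then show ?thesis using P1_N[OF B] by simp
  next
    case False then show ?thesis using Suc P_step[OF B, of k] by simp
  qed
qed

end


context nang begin

lemma sum_single: "(\<Sum>i\<in>I. Poly_Mapping.single c (g i)) = Poly_Mapping.single c (\<Sum>i\<in>I. g i)"
  by (induction I rule: infinite_finite_induct) (auto simp: single_add)

lemma alt_sum: "(\<Sum>i=1..2*m+1. (-1::int)^(i+1)) = 1"
proof (induction m)
  case 0 then show ?case by simp
next
  case (Suc m)
  have "(\<Sum>i=1..2*Suc m+1. (-1::int)^(i+1)) = (\<Sum>i=1..2*m+1. (-1::int)^(i+1)) + (-1)^(2*m+3) + (-1)^(2*m+4)"
    by (simp add: sum.cl_ivl_Suc)
  also have "\<dots> = 1" using Suc by simp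
  finally show ?case .
qed

lemma genZ0_R: "gen C Z0 \<in> R"
proof -
  have P: "(Pobj 1 Z0, Pmap 1 Z0) \<in> N" using P1_N[OF Z0_ob] .
  have o: "Pobj 1 Z0 i = Z0" for i by (simp add: Pobj_def)
  obtain m where m: "n = 2*m+1" using nodd by (metis oddE)
  have "chi C n (Pobj 1 Z0, Pmap 1 Z0) = (\<Sum>i\<in>{1..n}. Poly_Mapping.single (isocls C Z0) ((-1::int) ^ (i + 1)))"
    unfolding chi_def using o by simp
  also have "\<dots> = Poly_Mapping.single (isocls C Z0) (\<Sum>i=1..n. (-1::int) ^ (i + 1))" by (rule sum_single)
  also have "\<dots> = gen C Z0" unfolding m alt_sum gen_def ..
  finally have "chi C n (Pobj 1 Z0, Pmap 1 Z0) = gen C Z0" .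
  then show ?thesis using chi_R[OF P] by simp
qed

lemma nseq_ob: "is_nseq C n (A, \<alpha>) \<Longrightarrow> i \<in> {1..n} \<Longrightarrow> A i \<in> ob C"
  unfolding nseq_pair by blast

lemma genSigma_R: assumes A: "A \<in> ob C" shows "gen C A + gen C (sO C A) \<in> R"
proof -
  have nsP: "is_nseq C n (Pobj 1 A, Pmap 1 A)" using P_nseq[OF A] n3 by simp
  have "lrot C n (Pobj 1 A, Pmap 1 A) \<in> N" using N_rot[OF nsP] P1_N[OF A] by blast
  then obtain YA Ya where Y: "(YA, Ya) \<in> N" and YA: "YA = (\<lambda>i. if i < n then Pobj 1 A (Suc i) else sO C (Pobj 1 A 1))"
    unfolding lrot_pair by blast
  have Y1: "YA 1 = A" using YA n3 by (simp add: Pobj_def)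
  have Yn: "YA n = sO C A" using YA by (simp add: Pobj_def)
  have Yi: "i \<in> {1..n} - {1, n} \<Longrightarrow> YA i = Z0" for i using YA by (auto simp: Pobj_def)
  have "(\<Sum>i\<in>{1, n}. Poly_Mapping.single (isocls C (fst (YA, Ya) i)) ((-1) ^ (i + 1))) \<in> R"
    by (rule chi_partial[OF R_sub chi_R[OF Y]]) (use n3 genZ0_R Yi in auto)
  moreover have "(\<Sum>i\<in>{1, n}. Poly_Mapping.single (isocls C (fst (YA, Ya) i)) ((-1::int) ^ (i + 1)))
      = gen C A + gen C (sO C A)"
    using n3 nodd Y1 Yn by (simp add: gen_def)
  ultimately show ?thesis by simp
qed

lemma biprod_rz: assumes A: "A \<in> ob C" and Z: "is_zero_obj C Z"
  shows "biprod C A Z A (idm C A) (mzero C Z A) (idm C A) (mzero C A Z)"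
proof -
  have Zo: "Z \<in> ob C" using zero_ob[OF Z] .
  have h: "idm C A \<in> hom C A A" "mzero C Z A \<in> hom C Z A" "mzero C A Z \<in> hom C A Z"
    using id_hom A Zo mzero_hom by auto
  have e1: "cmp C (mzero C A Z) (mzero C Z A) = idm C Z"
    using zero_eq[OF cmp_hom[OF h(2) h(3)] id_hom[OF Zo]] Z by blast
  have e2: "cmp C (mzero C Z A) (mzero C A Z) = mzero C A A" using comp_zero[OF Z h(3) h(2)] .
  show ?thesis unfolding biprod_def
    using A Zo h e1 e2 id_l[OF h(1)] id_l[OF h(2)] id_r[OF h(3)] madd_zr[OF h(1)] by simp
qed

lemma biprod_lz: assumes B: "B \<in> ob C" and Z: "is_zero_obj C Z"
  shows "biprod C Z B B (mzero C Z B) (idm C B) (mzero C B Z) (idm C B)"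
proof -
  have Zo: "Z \<in> ob C" using zero_ob[OF Z] .
  have h: "idm C B \<in> hom C B B" "mzero C Z B \<in> hom C Z B" "mzero C B Z \<in> hom C B Z"
    using id_hom B Zo mzero_hom by auto
  have e1: "cmp C (mzero C B Z) (mzero C Z B) = idm C Z"
    using zero_eq[OF cmp_hom[OF h(2) h(3)] id_hom[OF Zo]] Z by blast
  have e2: "cmp C (mzero C Z B) (mzero C B Z) = mzero C B B" using comp_zero[OF Z h(3) h(2)] .
  show ?thesis unfolding biprod_def
    using B Zo h e1 e2 id_l[OF h(1)] id_l[OF h(2)] id_r[OF h(3)] madd_zl[OF h(1)] by simp
qed

definition dsmap :: "(nat \<Rightarrow> 'm) \<Rightarrow> (nat \<Rightarrow> 'm) \<Rightarrow> (nat \<Rightarrow> 'm) \<Rightarrow> (nat \<Rightarrow> 'm) \<Rightarrow> (nat \<Rightarrow> 'm) \<Rightarrow> (nat \<Rightarrow> 'm) \<Rightarrow> nat \<Rightarrow> 'm" where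
  "dsmap \<alpha> \<beta> j1 j2 q1 q2 = (\<lambda>i. if i < n then madd C (cmp C (j1 (Suc i)) (cmp C (\<alpha> i) (q1 i))) (cmp C (j2 (Suc i)) (cmp C (\<beta> i) (q2 i)))
          else madd C (cmp C (sM C (j1 1)) (cmp C (\<alpha> n) (q1 n))) (cmp C (sM C (j2 1)) (cmp C (\<beta> n) (q2 n))))"

lemma dsum_N: assumes X: "(A, \<alpha>) \<in> N" and Y: "(B, \<beta>) \<in> N"
  and bp: "\<And>i. i \<in> {1..n} \<Longrightarrow> biprod C (A i) (B i) (D i) (j1 i) (j2 i) (q1 i) (q2 i)"
  shows "(D, dsmap \<alpha> \<beta> j1 j2 q1 q2) \<in> N"
proof (rule N_sum[OF X Y])
  have nX: "is_nseq C n (A, \<alpha>)" and nY: "is_nseq C n (B, \<beta>)" using N_nseq X Y by auto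
  have bpi: "D i \<in> ob C \<and> j1 i \<in> hom C (A i) (D i) \<and> j2 i \<in> hom C (B i) (D i) \<and>
    q1 i \<in> hom C (D i) (A i) \<and> q2 i \<in> hom C (D i) (B i)" if "i \<in> {1..n}" for i
    using bp[OF that] unfolding biprod_def by blast
  have n1: "1 \<in> {1..n}" "n \<in> {1..n}" using n3 by auto
  show "is_nseq C n (D, dsmap \<alpha> \<beta> j1 j2 q1 q2)" unfolding nseq_pair
  proof (intro conjI ballI)
    fix i assume "i \<in> {1..n}" then show "D i \<in> ob C" using bpi by blast
  next
    fix i assume i: "i \<in> {1..<n}"
    then have i': "i \<in> {1..n}" "Suc i \<in> {1..n}" by auto
    have a: "\<alpha> i \<in> hom C (A i) (A (Suc i))" "\<beta> i \<in> hom C (B i) (B (Suc i))"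
      using nX nY i unfolding nseq_pair by auto
    show "dsmap \<alpha> \<beta> j1 j2 q1 q2 i \<in> hom C (D i) (D (Suc i))"
      unfolding dsmap_def using i
      by (simp, intro madd_hom cmp_hom) (use a bpi[OF i'(1)] bpi[OF i'(2)] in blast)+
  next
    have a: "\<alpha> n \<in> hom C (A n) (sO C (A 1))" "\<beta> n \<in> hom C (B n) (sO C (B 1))"
      using nX nY unfolding nseq_pair by auto
    have s: "sM C (j1 1) \<in> hom C (sO C (A 1)) (sO C (D 1))" "sM C (j2 1) \<in> hom C (sO C (B 1)) (sO C (D 1))"
      using sM_hom bpi[OF n1(1)] by auto
    have e: "dsmap \<alpha> \<beta> j1 j2 q1 q2 n = madd C (cmp C (sM C (j1 1)) (cmp C (\<alpha> n) (q1 n))) (cmp C (sM C (j2 1)) (cmp C (\<beta> n) (q2 n)))"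
      unfolding dsmap_def by simp
    have q: "q1 n \<in> hom C (D n) (A n)" "q2 n \<in> hom C (D n) (B n)" using bpi[OF n1(2)] by auto
    show "dsmap \<alpha> \<beta> j1 j2 q1 q2 n \<in> hom C (D n) (sO C (D 1))"
      unfolding e by (rule madd_hom[OF cmp_hom[OF cmp_hom[OF q(1) a(1)] s(1)] cmp_hom[OF cmp_hom[OF q(2) a(2)] s(2)]])
  qed
  show "is_dsum C n (A, \<alpha>) (B, \<beta>) (D, dsmap \<alpha> \<beta> j1 j2 q1 q2)"
    unfolding is_dsum_def using bp by (simp, intro exI[of _ j1] exI[of _ j2] exI[of _ q1] exI[of _ q2]) (auto simp: dsmap_def)
qed

end


context nang begin

lemma bp_R: assumes A: "A \<in> ob C" and B: "B \<in> ob C" and bp: "biprod C A B D i1 i2 p1 p2"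
  shows "gen C A - gen C D + gen C B \<in> R"
proof -
  define DD where "DD = (\<lambda>i. if i = 1 then A else if i = 2 then D else if i = (3::nat) then B else Z0)"
  define J1 where "J1 = (\<lambda>i. if i = 1 then idm C A else if i = 2 then i1 else if i = (3::nat) then mzero C Z0 B else idm C Z0)"
  define J2 where "J2 = (\<lambda>i. if i = 1 then mzero C Z0 A else if i = 2 then i2 else if i = (3::nat) then idm C B else mzero C Z0 Z0)"
  define Q1 where "Q1 = (\<lambda>i. if i = 1 then idm C A else if i = 2 then p1 else if i = (3::nat) then mzero C B Z0 else idm C Z0)"
  define Q2 where "Q2 = (\<lambda>i. if i = 1 then mzero C A Z0 else if i = 2 then p2 else if i = (3::nat) then idm C B else mzero C Z0 Z0)"
  have bpi: "biprod C (Pobj 1 A i) (Pobj 2 B i) (DD i) (J1 i) (J2 i) (Q1 i) (Q2 i)" for i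
  proof -
    consider "i = 1" | "i = 2" | "i = 3" | "i \<noteq> 1 \<and> i \<noteq> 2 \<and> i \<noteq> 3" by blast
    then show ?thesis
    proof cases
      case 1 then show ?thesis using biprod_rz[OF A Z0] by (simp add: Pobj_def DD_def J1_def J2_def Q1_def Q2_def)
    next
      case 2 then show ?thesis using bp by (simp add: Pobj_def DD_def J1_def J2_def Q1_def Q2_def)
    next
      case 3 then show ?thesis using biprod_lz[OF B Z0] by (simp add: Pobj_def DD_def J1_def J2_def Q1_def Q2_def)
    next
      case 4 then show ?thesis using biprod_rz[OF Z0_ob Z0] by (simp add: Pobj_def DD_def J1_def J2_def Q1_def Q2_def numeral_2_eq_2 numeral_3_eq_3)
    qed
  qed
  have W: "(DD, dsmap (Pmap 1 A) (Pmap 2 B) J1 J2 Q1 Q2) \<in> N"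
    by (rule dsum_N[OF P_N[OF A] P_N[OF B] bpi]) (use n3 in auto)
  have "(\<Sum>i\<in>{1, 2, 3}. Poly_Mapping.single (isocls C (fst (DD, dsmap (Pmap 1 A) (Pmap 2 B) J1 J2 Q1 Q2) i)) ((-1) ^ (i + 1))) \<in> R"
    by (rule chi_partial[OF R_sub chi_R[OF W]]) (use n3 genZ0_R in \<open>auto simp: DD_def\<close>)
  moreover have "(\<Sum>i\<in>{1, 2, 3}. Poly_Mapping.single (isocls C (fst (DD, dsmap (Pmap 1 A) (Pmap 2 B) J1 J2 Q1 Q2) i)) ((-1::int) ^ (i + 1)))
     = gen C A - gen C D + gen C B"
    by (simp add: DD_def gen_def single_uminus)
  ultimately show ?thesis by simp
qed

lemma Sigma_G: assumes G: "subgroup G F" and RG: "R \<subseteq> G" and A: "A \<in> ob C"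
  shows "gen C A \<in> G \<longleftrightarrow> gen C (sO C A) \<in> G"
proof -
  have s: "gen C A + gen C (sO C A) \<in> G" using genSigma_R[OF A] RG by blast
  show ?thesis
  proof
    assume h: "gen C A \<in> G"
    have "gen C A + gen C (sO C A) - gen C A \<in> G" using sg_diff[OF G s h] .
    then show "gen C (sO C A) \<in> G" by simp
  next
    assume h: "gen C (sO C A) \<in> G"
    have "gen C A + gen C (sO C A) - gen C (sO C A) \<in> G" using sg_diff[OF G s h] .
    then show "gen C A \<in> G" by simp
  qed
qed

lemma bp_G: assumes G: "subgroup G F" and RG: "R \<subseteq> G" and A: "A \<in> ob C" and B: "B \<in> ob C"
  and bp: "biprod C A B D i1 i2 p1 p2" and gA: "gen C A \<in> G" and gB: "gen C B \<in> G"
  shows "gen C D \<in> G"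
proof -
  have s: "gen C A - gen C D + gen C B \<in> G" using bp_R[OF A B bp] RG by blast
  have "gen C A + gen C B - (gen C A - gen C D + gen C B) \<in> G"
    using sg_diff[OF G sg_add[OF G gA gB] s] .
  then show ?thesis by (simp add: algebra_simps)
qed

lemma dense_R: assumes A: "A \<in> ob C" and bp: "biprod C A (sO C A) D i1 i2 p1 p2"
  shows "gen C D \<in> R"
proof -
  have s: "gen C A - gen C D + gen C (sO C A) \<in> R" using bp_R[OF A sO_ob[OF A] bp] .
  have "gen C A + gen C (sO C A) - (gen C A - gen C D + gen C (sO C A)) \<in> R"
    using sg_diff[OF R_sub genSigma_R[OF A] s] .
  then show ?thesis by (simp add: algebra_simps)
qed

lemma iso_sym: "isomorphic C A B \<Longrightarrow> isomorphic C B A"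
  unfolding isomorphic_def is_iso_def by blast

lemma iso_trans: assumes "isomorphic C A B" "isomorphic C B D" shows "isomorphic C A D"
proof -
  obtain f g where f: "f \<in> hom C A B" "g \<in> hom C B A" "cmp C g f = idm C A" "cmp C f g = idm C B"
    using assms(1) unfolding isomorphic_def is_iso_def by blast
  obtain f' g' where f': "f' \<in> hom C B D" "g' \<in> hom C D B" "cmp C g' f' = idm C B" "cmp C f' g' = idm C D"
    using assms(2) unfolding isomorphic_def is_iso_def by blast
  have "cmp C (cmp C g g') (cmp C f' f) = cmp C g (cmp C g' (cmp C f' f))"
    using assoc[OF cmp_hom[OF f(1) f'(1)] f'(2) f(2)] by simp
  also have "\<dots> = cmp C g (cmp C (cmp C g' f') f)" using assoc[OF f(1) f'(1) f'(2)] by simp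
  also have "\<dots> = idm C A" using f f' id_l[OF f(1)] by simp
  finally have e1: "cmp C (cmp C g g') (cmp C f' f) = idm C A" .
  have "cmp C (cmp C f' f) (cmp C g g') = cmp C f' (cmp C f (cmp C g g'))"
    using assoc[OF cmp_hom[OF f'(2) f(2)] f(1) f'(1)] by simp
  also have "\<dots> = cmp C f' (cmp C (cmp C f g) g')" using assoc[OF f'(2) f(2) f(1)] by simp
  also have "\<dots> = idm C D" using f f' id_l[OF f'(2)] by simp
  finally have e2: "cmp C (cmp C f' f) (cmp C g g') = idm C D" .
  show ?thesis unfolding isomorphic_def is_iso_def
    using cmp_hom[OF f(1) f'(1)] cmp_hom[OF f'(2) f(2)] e1 e2 by blast
qed

lemma iso_gen: assumes "isomorphic C A B" shows "gen C A = gen C B"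
proof -
  have "isocls C A = isocls C B" unfolding isocls_def
    using iso_trans iso_sym assms by blast
  then show ?thesis by (simp add: gen_def)
qed

end


context nang begin

lemma bp_ex: "A \<in> ob C \<Longrightarrow> B \<in> ob C \<Longrightarrow> \<exists>D i1 i2 p1 p2. biprod C A B D i1 i2 p1 p2"
  using addC unfolding additive_def by blast

lemma ext_step: assumes X: "(A, \<alpha>) \<in> N" and m: "2 \<le> m" "Suc (Suc m) \<le> n"
  shows "\<exists>X'\<in>N. fst X' 1 = A 1 \<and> fst X' 2 = A 2 \<and> snd X' 1 = \<alpha> 1 \<and>
     (\<forall>i. i \<noteq> Suc m \<and> i \<noteq> Suc (Suc m) \<longrightarrow> fst X' i = A i) \<and> gen C (fst X' (Suc m)) \<in> R"
proof -
  define k where "k = Suc m"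
  have k: "3 \<le> k" "Suc k \<le> n" "1 \<le> k" "k < n" using m k_def by auto
  have nX: "is_nseq C n (A, \<alpha>)" using N_nseq[OF X] .
  have Ao: "i \<in> {1..n} \<Longrightarrow> A i \<in> ob C" for i using nseq_ob[OF nX] .
  have Ak: "A k \<in> ob C" "A (Suc k) \<in> ob C" using Ao k by auto
  define B where "B = sO C (A k)"
  have Bo: "B \<in> ob C" using sO_ob[OF Ak(1)] B_def by simp
  obtain D1 a1 a2 b1 b2 where bp1: "biprod C (A k) B D1 a1 a2 b1 b2" using bp_ex[OF Ak(1) Bo] by blast
  obtain D2 c1 c2 d1 d2 where bp2: "biprod C (A (Suc k)) B D2 c1 c2 d1 d2" using bp_ex[OF Ak(2) Bo] by blast
  define DD where "DD = (\<lambda>i. if i = k then D1 else if i = Suc k then D2 else A i)"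
  define J1 where "J1 = (\<lambda>i. if i = k then a1 else if i = Suc k then c1 else idm C (A i))"
  define J2 where "J2 = (\<lambda>i. if i = k then a2 else if i = Suc k then c2 else mzero C Z0 (A i))"
  define Q1 where "Q1 = (\<lambda>i. if i = k then b1 else if i = Suc k then d1 else idm C (A i))"
  define Q2 where "Q2 = (\<lambda>i. if i = k then b2 else if i = Suc k then d2 else mzero C (A i) Z0)"
  have bpi: "biprod C (A i) (Pobj k B i) (DD i) (J1 i) (J2 i) (Q1 i) (Q2 i)" if i: "i \<in> {1..n}" for i
  proof -
    consider "i = k" | "i = Suc k" | "i \<noteq> k \<and> i \<noteq> Suc k" by blast
    then show ?thesis
    proof cases
      case 1 then show ?thesis using bp1 by (simp add: Pobj_def DD_def J1_def J2_def Q1_def Q2_def)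
    next
      case 2 then show ?thesis using bp2 by (simp add: Pobj_def DD_def J1_def J2_def Q1_def Q2_def)
    next
      case 3 then show ?thesis using biprod_rz[OF Ao[OF i] Z0] by (simp add: Pobj_def DD_def J1_def J2_def Q1_def Q2_def)
    qed
  qed
  have W: "(DD, dsmap \<alpha> (Pmap k B) J1 J2 Q1 Q2) \<in> N"
    by (rule dsum_N[OF X P_N[OF Bo k(3) k(4)] bpi])
  have o12: "1 \<noteq> k" "1 \<noteq> Suc k" "2 \<noteq> k" "2 \<noteq> Suc k" using k by auto
  have D1o: "DD 1 = A 1" "DD 2 = A 2" using o12 by (auto simp: DD_def)
  have a1h: "\<alpha> 1 \<in> hom C (A 1) (A 2)" using nX n3 unfolding nseq_pair by (auto simp: numeral_2_eq_2)
  have Pm1: "Pmap k B 1 \<in> hom C Z0 Z0"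
  proof -
    have "Pmap k B 1 \<in> hom C (Pobj k B 1) (Pobj k B (Suc 1))" using P_nseq[OF Bo k(3) k(4)] n3 unfolding nseq_pair by auto
    moreover have "Pobj k B 1 = Z0" "Pobj k B (Suc 1) = Z0" using o12 by (auto simp: Pobj_def numeral_2_eq_2)
    ultimately show ?thesis by simp
  qed
  have A1o: "A 1 \<in> ob C" "A 2 \<in> ob C" using Ao n3 by auto
  have z: "cmp C (mzero C Z0 (A 2)) (cmp C (Pmap k B 1) (mzero C (A 1) Z0)) = mzero C (A 1) (A 2)"
    using comp_zero[OF Z0 cmp_hom[OF mzero_hom[OF A1o(1) Z0_ob] Pm1] mzero_hom[OF Z0_ob A1o(2)]] .
  have s1: "dsmap \<alpha> (Pmap k B) J1 J2 Q1 Q2 1 = \<alpha> 1"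
  proof -
    have "dsmap \<alpha> (Pmap k B) J1 J2 Q1 Q2 1 = madd C (cmp C (idm C (A 2)) (cmp C (\<alpha> 1) (idm C (A 1))))
         (cmp C (mzero C Z0 (A 2)) (cmp C (Pmap k B 1) (mzero C (A 1) Z0)))"
      unfolding dsmap_def using n3 o12 by (simp add: J1_def J2_def Q1_def Q2_def numeral_2_eq_2)
    also have "\<dots> = madd C (\<alpha> 1) (mzero C (A 1) (A 2))" using z id_r[OF a1h] id_l[OF a1h] by simp
    also have "\<dots> = \<alpha> 1" using madd_zr[OF a1h] .
    finally show ?thesis .
  qed
  have gD1: "gen C D1 \<in> R" using dense_R[OF Ak(1)] bp1 B_def by blast
  show ?thesis
    by (rule bexI[OF _ W]) (use D1o s1 gD1 k_def in \<open>auto simp: DD_def\<close>)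
qed

lemma ext_iter: assumes A1: "A1 \<in> ob C" and A2: "A2 \<in> ob C" and f: "f \<in> hom C A1 A2"
  and G: "subgroup G F" and RG: "R \<subseteq> G"
  shows "2 \<le> m \<Longrightarrow> m < n \<Longrightarrow> \<exists>X\<in>N. fst X 1 = A1 \<and> fst X 2 = A2 \<and> snd X 1 = f \<and>
          (\<forall>i. 3 \<le> i \<and> i \<le> m \<longrightarrow> gen C (fst X i) \<in> G)"
proof (induction m)
  case 0 then show ?case by simp
next
  case (Suc m)
  show ?case
  proof (cases "m < 2")
    case True
    then have "Suc m = 2" using Suc by simp
    then show ?thesis using N_ext[OF A1 A2 f] by auto
  next
    case False
    then obtain X where X: "X \<in> N" "fst X 1 = A1" "fst X 2 = A2" "snd X 1 = f"
       "\<forall>i. 3 \<le> i \<and> i \<le> m \<longrightarrow> gen C (fst X i) \<in> G" using Suc by auto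
    obtain A \<alpha> where Xp: "X = (A, \<alpha>)" by (cases X)
    obtain X' where X': "X' \<in> N" "fst X' 1 = A 1" "fst X' 2 = A 2" "snd X' 1 = \<alpha> 1"
      "\<forall>i. i \<noteq> Suc m \<and> i \<noteq> Suc (Suc m) \<longrightarrow> fst X' i = A i" "gen C (fst X' (Suc m)) \<in> R"
      using ext_step[of A \<alpha> m] X(1) Xp False Suc by auto
    have "\<forall>i. 3 \<le> i \<and> i \<le> Suc m \<longrightarrow> gen C (fst X' i) \<in> G"
    proof (intro allI impI)
      fix i assume i: "3 \<le> i \<and> i \<le> Suc m"
      show "gen C (fst X' i) \<in> G"
      proof (cases "i = Suc m")
        case True then show ?thesis using X'(6) RG by auto
      next
        case False then show ?thesis using X'(5) X(5) Xp i by auto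
      qed
    qed
    then show ?thesis using X X' Xp by auto
  qed
qed

end


lemma nseq_pairG: "is_nseq D m (A, \<alpha>) \<longleftrightarrow>
     (\<forall>i\<in>{1..m}. A i \<in> ob D) \<and>
     (\<forall>i\<in>{1..<m}. \<alpha> i \<in> hom D (A i) (A (Suc i))) \<and>
     \<alpha> m \<in> hom D (A m) (sO D (A 1))"
  unfolding is_nseq_def by simp

context nangH begin

abbreviation "FS \<equiv> fullsub C S"

lemma FS_ob: "ob FS = S" by (simp add: fullsub_def)
lemma FS_hom: "hom FS A B = (if A \<in> S \<and> B \<in> S then hom C A B else {})" by (simp add: fullsub_def)
lemma FS_other: "cmp FS = cmp C" "idm FS = idm C" "madd FS = madd C" "mzero FS = mzero C"
  "sO FS = sO C" "sM FS = sM C" by (simp_all add: fullsub_def)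

lemma FS_hom_sub: "f \<in> hom FS A B \<Longrightarrow> f \<in> hom C A B" by (simp add: FS_hom split: if_splits)
lemma FS_hom_ob: "f \<in> hom FS A B \<Longrightarrow> A \<in> S \<and> B \<in> S" by (simp add: FS_hom split: if_splits)
lemma FS_hom_iff: "A \<in> S \<Longrightarrow> B \<in> S \<Longrightarrow> hom FS A B = hom C A B" by (simp add: FS_hom)

lemma S_ob: "A \<in> S \<Longrightarrow> A \<in> ob C" by simp
lemma S_sO: "A \<in> S \<Longrightarrow> sO C A \<in> S"
  using Sigma_G[OF Hp_sub R_Hp] S_iff sO_ob by blast
lemma S_sO_inv: "A \<in> ob C \<Longrightarrow> sO C A \<in> S \<Longrightarrow> A \<in> S"
  using Sigma_G[OF Hp_sub R_Hp] S_iff sO_ob by blast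
lemma Z0_S: "Z0 \<in> S" using S_iff Z0_ob genZ0_R R_Hp by blast
lemma S_bp: "A \<in> S \<Longrightarrow> B \<in> S \<Longrightarrow> biprod C A B D i1 i2 p1 p2 \<Longrightarrow> D \<in> S"
  using bp_G[OF Hp_sub R_Hp] S_iff unfolding biprod_def by blast
lemma S_isoc: "A \<in> S \<Longrightarrow> B \<in> ob C \<Longrightarrow> isomorphic C A B \<Longrightarrow> B \<in> S"
  using iso_gen S_iff by metis

lemma S_complete: assumes X: "X \<in> N" and j: "j \<in> {1..n}" and rest: "\<And>i. i \<in> {1..n} - {j} \<Longrightarrow> fst X i \<in> S"
  shows "fst X j \<in> S"
proof -
  obtain A \<alpha> where Xp: "X = (A, \<alpha>)" by (cases X)
  have "gen C (fst X j) \<in> Hp" using chi_single[OF Hp_sub chi_Hp[OF X] j] rest S_iff by blast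
  moreover have "fst X j \<in> ob C" using nseq_ob[of A \<alpha> j] N_nseq[OF X] Xp j by simp
  ultimately show ?thesis using S_iff by blast
qed

lemma sub_nseq: "is_nseq FS n X \<longleftrightarrow> is_nseq C n X \<and> (\<forall>i\<in>{1..n}. fst X i \<in> S)"
proof -
  obtain A \<alpha> where Xp: "X = (A, \<alpha>)" by (cases X)
  have n1: "1 \<in> {1..n}" using n3 by auto
  have "is_nseq FS n (A, \<alpha>) \<longleftrightarrow> is_nseq C n (A, \<alpha>) \<and> (\<forall>i\<in>{1..n}. A i \<in> S)"
  proof
    assume L: "is_nseq FS n (A, \<alpha>)"
    have o: "\<forall>i\<in>{1..n}. A i \<in> S" using L unfolding nseq_pairG FS_ob by blast
    have m: "\<forall>i\<in>{1..<n}. \<alpha> i \<in> hom C (A i) (A (Suc i))" using L FS_hom_sub unfolding nseq_pairG by blast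
    have l: "\<alpha> n \<in> hom C (A n) (sO C (A 1))" using L FS_hom_sub unfolding nseq_pairG FS_other by blast
    show "is_nseq C n (A, \<alpha>) \<and> (\<forall>i\<in>{1..n}. A i \<in> S)" unfolding nseq_pairG using o m l by auto
  next
    assume R: "is_nseq C n (A, \<alpha>) \<and> (\<forall>i\<in>{1..n}. A i \<in> S)"
    then have o: "\<forall>i\<in>{1..n}. A i \<in> S" by blast
    have m: "\<forall>i\<in>{1..<n}. \<alpha> i \<in> hom FS (A i) (A (Suc i))"
    proof
      fix i assume i: "i \<in> {1..<n}"
      have "A i \<in> S" "A (Suc i) \<in> S" using o i by auto
      then show "\<alpha> i \<in> hom FS (A i) (A (Suc i))" using R i FS_hom unfolding nseq_pairG by auto
    qed
    have l: "\<alpha> n \<in> hom FS (A n) (sO FS (A 1))"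
    proof -
      have "A n \<in> S" "sO C (A 1) \<in> S" using o n1 S_sO by auto
      then show ?thesis using R FS_hom FS_other unfolding nseq_pairG by auto
    qed
    show "is_nseq FS n (A, \<alpha>)" unfolding nseq_pairG FS_ob using o m l by blast
  qed
  then show ?thesis using Xp by simp
qed

lemma mneg_sub: assumes f: "f \<in> hom C A B" and A: "A \<in> S" and B: "B \<in> S"
  shows "mneg FS f = mneg C f"
proof -
  have "(\<lambda>g. \<exists>A'\<in>ob FS. \<exists>B'\<in>ob FS. f \<in> hom FS A' B' \<and> g \<in> hom FS A' B' \<and> madd FS f g = mzero FS A' B')
      = (\<lambda>g. \<exists>A'\<in>ob C. \<exists>B'\<in>ob C. f \<in> hom C A' B' \<and> g \<in> hom C A' B' \<and> madd C f g = mzero C A' B')"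
  proof (rule ext, rule iffI)
    fix g assume "\<exists>A'\<in>ob FS. \<exists>B'\<in>ob FS. f \<in> hom FS A' B' \<and> g \<in> hom FS A' B' \<and> madd FS f g = mzero FS A' B'"
    then show "\<exists>A'\<in>ob C. \<exists>B'\<in>ob C. f \<in> hom C A' B' \<and> g \<in> hom C A' B' \<and> madd C f g = mzero C A' B'"
      using FS_hom_sub unfolding FS_ob FS_other by fastforce
  next
    fix g assume "\<exists>A'\<in>ob C. \<exists>B'\<in>ob C. f \<in> hom C A' B' \<and> g \<in> hom C A' B' \<and> madd C f g = mzero C A' B'"
    then obtain A' B' where h: "f \<in> hom C A' B'" "g \<in> hom C A' B'" "madd C f g = mzero C A' B'" by blast
    have "A' = A" "B' = B" using hom_uniq[OF f h(1)] by auto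
    then show "\<exists>A'\<in>ob FS. \<exists>B'\<in>ob FS. f \<in> hom FS A' B' \<and> g \<in> hom FS A' B' \<and> madd FS f g = mzero FS A' B'"
      using h A B FS_hom unfolding FS_ob FS_other by auto
  qed
  then show ?thesis unfolding mneg_def by simp
qed

lemma lrot_sub: assumes X: "is_nseq C n (A, \<alpha>)" and S: "\<forall>i\<in>{1..n}. A i \<in> S"
  shows "lrot FS n (A, \<alpha>) = lrot C n (A, \<alpha>)"
proof -
  have a1: "\<alpha> 1 \<in> hom C (A 1) (A 2)" using X n3 unfolding nseq_pair by (auto simp: numeral_2_eq_2)
  have s: "A 1 \<in> S" "A 2 \<in> S" using S n3 by auto
  have e: "mneg FS (sM C (\<alpha> 1)) = mneg C (sM C (\<alpha> 1))"
    using mneg_sub[OF sM_hom[OF a1] S_sO[OF s(1)] S_sO[OF s(2)]] .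
  show ?thesis unfolding lrot_def FS_other prod.case e ..
qed

lemma biprod_sub: "biprod FS A B D i1 i2 p1 p2 \<Longrightarrow> biprod C A B D i1 i2 p1 p2"
  unfolding biprod_def FS_other FS_ob using FS_hom_sub by blast
lemma biprod_up: "biprod C A B D i1 i2 p1 p2 \<Longrightarrow> A \<in> S \<Longrightarrow> B \<in> S \<Longrightarrow> D \<in> S \<Longrightarrow> biprod FS A B D i1 i2 p1 p2"
  unfolding biprod_def FS_other FS_ob using FS_hom by auto

lemma dsum_sub: assumes "is_dsum FS n X Y Z" shows "is_dsum C n X Y Z"
proof -
  obtain A \<alpha> where Xp: "X = (A, \<alpha>)" by (cases X)
  obtain B \<beta> where Yp: "Y = (B, \<beta>)" by (cases Y)
  obtain D \<sigma> where Zp: "Z = (D, \<sigma>)" by (cases Z)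
  show ?thesis using assms unfolding Xp Yp Zp is_dsum_def FS_other using biprod_sub by auto blast
qed

lemma iso_sub: "is_iso FS A B f \<Longrightarrow> is_iso C A B f"
  unfolding is_iso_def FS_other using FS_hom_sub by blast

lemma seq_mor_sub: "seq_mor FS n X Y \<phi> \<Longrightarrow> seq_mor C n X Y \<phi>"
  unfolding seq_mor_def FS_other using FS_hom_sub by (auto split: prod.splits)

lemma seq_iso_sub: "seq_iso FS n X Y \<Longrightarrow> seq_iso C n X Y"
  unfolding seq_iso_def using seq_mor_sub iso_sub by blast

lemma seq_mor_up: assumes "seq_mor C n X Y \<phi>" "\<forall>i\<in>{1..n}. fst X i \<in> S" "\<forall>i\<in>{1..n}. fst Y i \<in> S"
  shows "seq_mor FS n X Y \<phi>"
proof -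
  obtain A \<alpha> where Xp: "X = (A, \<alpha>)" by (cases X)
  obtain B \<beta> where Yp: "Y = (B, \<beta>)" by (cases Y)
  show ?thesis using assms unfolding Xp Yp seq_mor_def FS_other using FS_hom by auto
qed

lemma zero_transfer: assumes Z0': "is_zero_obj C Z'" and Zo: "Z \<in> ob C"
  and u: "u \<in> hom C Z Z'" and v: "v \<in> hom C Z' Z" and vu: "cmp C v u = idm C Z"
  shows "is_zero_obj C Z"
  unfolding is_zero_obj_def
proof (intro conjI ballI Zo)
  fix A assume A: "A \<in> ob C"
  obtain g where g: "g \<in> hom C Z' A" using Z0' A unfolding is_zero_obj_def by blast
  show "\<exists>!f. f \<in> hom C Z A"
  proof (rule ex1I[of _ "cmp C g u"])
    show "cmp C g u \<in> hom C Z A" using cmp_hom[OF u g] .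
  next
    fix f assume f: "f \<in> hom C Z A"
    have "f = cmp C f (cmp C v u)" using vu id_r[OF f] by simp
    also have "\<dots> = cmp C (cmp C f v) u" using assoc[OF u v f] .
    also have "cmp C f v = g" using zero_unique_from[OF Z0' cmp_hom[OF v f] g] .
    finally show "f = cmp C g u" .
  qed
  obtain h where h: "h \<in> hom C A Z'" using Z0' A unfolding is_zero_obj_def by blast
  show "\<exists>!f. f \<in> hom C A Z"
  proof (rule ex1I[of _ "cmp C v h"])
    show "cmp C v h \<in> hom C A Z" using cmp_hom[OF h v] .
  next
    fix f assume f: "f \<in> hom C A Z"
    have "f = cmp C (cmp C v u) f" using vu id_l[OF f] by simp
    also have "\<dots> = cmp C v (cmp C u f)" using assoc[OF f u v] by simp
    also have "cmp C u f = h" using zero_unique_to[OF Z0' cmp_hom[OF f u] h] .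
    finally show "f = cmp C v h" .
  qed
qed

lemma zero_sub: assumes Z: "is_zero_obj FS Z" shows "is_zero_obj C Z"
proof -
  have ZS: "Z \<in> S" using Z unfolding is_zero_obj_def FS_ob by blast
  obtain u where u: "u \<in> hom FS Z Z0" using Z Z0_S unfolding is_zero_obj_def FS_ob by blast
  obtain v where v: "v \<in> hom FS Z0 Z" using Z Z0_S unfolding is_zero_obj_def FS_ob by blast
  have u': "u \<in> hom C Z Z0" and v': "v \<in> hom C Z0 Z" using u v FS_hom_sub by auto
  have "cmp C v u \<in> hom FS Z Z" using cmp_hom[OF u' v'] FS_hom ZS by simp
  moreover have "idm C Z \<in> hom FS Z Z" using id_hom ZS FS_hom by simp
  ultimately have "cmp C v u = idm C Z" using Z ZS unfolding is_zero_obj_def FS_ob by blast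
  then show ?thesis using zero_transfer[OF Z0 _ u' v'] ZS by simp
qed

end


context nangH begin

abbreviation "NS \<equiv> {X \<in> N. \<forall>i\<in>{1..n}. fst X i \<in> S}"

lemma cat_FS: "category FS"
  unfolding category_def FS_ob FS_other
  apply (intro conjI)
  subgoal using FS_hom by auto
  subgoal using FS_hom_sub hom_uniq by blast
  subgoal using FS_hom id_hom by auto
  subgoal using FS_hom cmp_hom by auto
  subgoal using FS_hom_sub id_l id_r by blast
  subgoal using FS_hom_sub assoc by blast
  done

lemma homgrp_FS: "A \<in> S \<Longrightarrow> B \<in> S \<Longrightarrow> homgrp FS A B = homgrp C A B"
proof -
  assume a: "A \<in> S" "B \<in> S"
  have h: "hom FS A B = hom C A B" using FS_hom_iff[OF a] .
  show ?thesis unfolding homgrp_def h FS_other ..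
qed

lemma preadd_FS: "preadditive FS"
  unfolding preadditive_def
  apply (intro conjI)
  subgoal by (rule cat_FS)
  subgoal
  proof (intro ballI)
    fix A B assume "A \<in> ob FS" "B \<in> ob FS"
    then have ab: "A \<in> S" "B \<in> S" using FS_ob by auto
    show "comm_group (homgrp FS A B)" unfolding homgrp_FS[OF ab] using grp[OF S_ob[OF ab(1)] S_ob[OF ab(2)]] .
  qed
  subgoal unfolding FS_other by (intro allI impI) (rule distl, (erule FS_hom_sub)+)
  subgoal unfolding FS_other by (intro allI impI) (rule distr, (erule FS_hom_sub)+)
  done

lemma Z0_FS: "is_zero_obj FS Z0"
  unfolding is_zero_obj_def FS_ob using Z0_S FS_hom_iff Z0 unfolding is_zero_obj_def by auto

lemma add_FS: "additive FS"
  unfolding additive_def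
proof (intro conjI)
  show "preadditive FS" by (rule preadd_FS)
  show "\<exists>Z. is_zero_obj FS Z" using Z0_FS by blast
  show "\<forall>A\<in>ob FS. \<forall>B\<in>ob FS. \<exists>S' i1 i2 p1 p2. biprod FS A B S' i1 i2 p1 p2"
  proof (intro ballI)
    fix A B assume "A \<in> ob FS" "B \<in> ob FS"
    then have AB: "A \<in> S" "B \<in> S" using FS_ob by auto
    then obtain D i1 i2 p1 p2 where bp: "biprod C A B D i1 i2 p1 p2" using bp_ex by force
    then have "D \<in> S" using S_bp AB by blast
    then show "\<exists>S' i1 i2 p1 p2. biprod FS A B S' i1 i2 p1 p2" using biprod_up[OF bp AB] by blast
  qed
qed

lemma sig_FS: "sigma_auto FS"
  unfolding sigma_auto_def FS_ob FS_other
proof (intro conjI)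
  show "bij_betw (sO C) S S"
    unfolding bij_betw_def
  proof
    show "inj_on (sO C) S" using bij_betw_imp_inj_on[OF sO_bij] by (rule inj_on_subset) auto
    show "sO C ` S = S"
    proof
      show "sO C ` S \<subseteq> S" using S_sO by blast
      show "S \<subseteq> sO C ` S"
      proof
        fix B assume B: "B \<in> S"
        then obtain A where A: "A \<in> ob C" "sO C A = B" using sO_surj by blast
        then have "A \<in> S" using S_sO_inv B by blast
        then show "B \<in> sO C ` S" using A by blast
      qed
    qed
  qed
  show "\<forall>A\<in>S. \<forall>B\<in>S. bij_betw (sM C) (hom FS A B) (hom FS (sO C A) (sO C B))"
    using FS_hom_iff S_sO sM_bij by simp
  show "\<forall>A\<in>S. sM C (idm C A) = idm C (sO C A)" using sM_id by simp
  show "\<forall>A B D f g. f \<in> hom FS A B \<longrightarrow> g \<in> hom FS B D \<longrightarrow> sM C (cmp C g f) = cmp C (sM C g) (sM C f)"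
    using FS_hom_sub sM_cmp by blast
qed

lemma NS_nseq: "X \<in> NS \<Longrightarrow> is_nseq FS n X"
  using sub_nseq N_nseq by blast

lemma NS_sum: "X \<in> NS \<Longrightarrow> Y \<in> NS \<Longrightarrow> is_nseq FS n Z \<Longrightarrow> is_dsum FS n X Y Z \<Longrightarrow> Z \<in> NS"
  using sub_nseq dsum_sub N_sum by blast

lemma NS_summand: "Z \<in> NS \<Longrightarrow> is_nseq FS n X \<Longrightarrow> is_nseq FS n Y \<Longrightarrow> is_dsum FS n X Y Z \<Longrightarrow> X \<in> NS"
  using sub_nseq dsum_sub N_summand by blast

lemma NS_iso: "X \<in> NS \<Longrightarrow> is_nseq FS n Y \<Longrightarrow> seq_iso FS n X Y \<Longrightarrow> Y \<in> NS"
  using sub_nseq seq_iso_sub N_iso by blast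

lemma NS_triv: assumes A: "A \<in> ob FS" and Z: "is_zero_obj FS Z"
  shows "((\<lambda>i. if i = 1 \<or> i = 2 then A else Z),
         (\<lambda>i. if i = 1 then idm FS A
              else if i = 2 then mzero FS A Z
              else if i < n then mzero FS Z Z else mzero FS Z (sO FS A))) \<in> NS"
proof -
  have ZC: "is_zero_obj C Z" using zero_sub[OF Z] .
  have ZS: "Z \<in> S" using Z unfolding is_zero_obj_def FS_ob by blast
  have AS: "A \<in> S" using A FS_ob by simp
  show ?thesis unfolding FS_other using N_triv[OF S_ob[OF AS] ZC] AS ZS by auto
qed

lemma NS_ext: assumes A1: "A1 \<in> ob FS" and A2: "A2 \<in> ob FS" and f: "f \<in> hom FS A1 A2"
  shows "\<exists>X\<in>NS. fst X 1 = A1 \<and> fst X 2 = A2 \<and> snd X 1 = f"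
proof -
  have S12: "A1 \<in> S" "A2 \<in> S" using A1 A2 FS_ob by auto
  have m: "2 \<le> n - 1" "n - 1 < n" using n3 by auto
  obtain X where X: "X \<in> N" "fst X 1 = A1" "fst X 2 = A2" "snd X 1 = f"
      "\<forall>i. 3 \<le> i \<and> i \<le> n - 1 \<longrightarrow> gen C (fst X i) \<in> Hp"
    using ext_iter[OF S_ob[OF S12(1)] S_ob[OF S12(2)] FS_hom_sub[OF f] Hp_sub R_Hp m] by blast
  obtain A \<alpha> where Xp: "X = (A, \<alpha>)" by (cases X)
  have ob: "i \<in> {1..n} \<Longrightarrow> fst X i \<in> ob C" for i using nseq_ob[of A \<alpha> i] N_nseq[OF X(1)] Xp by simp
  have lt: "i \<in> {1..n} - {n} \<Longrightarrow> fst X i \<in> S" for i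
  proof -
    assume i: "i \<in> {1..n} - {n}"
    consider "i = 1" | "i = 2" | "3 \<le> i \<and> i \<le> n - 1" using i by force
    then show "fst X i \<in> S"
    proof cases
      case 1 then show ?thesis using X S12 by simp
    next
      case 2 then show ?thesis using X S12 by simp
    next
      case 3 then show ?thesis using X(5) ob[of i] i S_iff by auto
    qed
  qed
  have "fst X n \<in> S" using S_complete[OF X(1) _ lt] n3 by auto
  then have "\<forall>i\<in>{1..n}. fst X i \<in> S" using lt by (metis DiffI singletonD)
  then show ?thesis using X by blast
qed

lemma NS_rot: assumes X: "is_nseq FS n X" shows "X \<in> NS \<longleftrightarrow> lrot FS n X \<in> NS"
proof -
  obtain A \<alpha> where Xp: "X = (A, \<alpha>)" by (cases X)
  have nC: "is_nseq C n (A, \<alpha>)" and oS: "\<forall>i\<in>{1..n}. A i \<in> S" using X Xp sub_nseq by auto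
  have e: "lrot FS n (A, \<alpha>) = lrot C n (A, \<alpha>)" using lrot_sub[OF nC oS] .
  have o2: "\<forall>i\<in>{1..n}. fst (lrot C n (A, \<alpha>)) i \<in> S"
    unfolding lrot_pair using oS S_sO n3 by auto
  show ?thesis unfolding Xp e using N_rot[OF nC] oS o2 by auto
qed

lemma NS_3: assumes X: "X \<in> NS" and Y: "Y \<in> NS" and f1: "f1 \<in> hom FS (fst X 1) (fst Y 1)"
  and f2: "f2 \<in> hom FS (fst X 2) (fst Y 2)" and c: "cmp FS (snd Y 1) f1 = cmp FS f2 (snd X 1)"
  shows "\<exists>\<phi>. \<phi> 1 = f1 \<and> \<phi> 2 = f2 \<and> seq_mor FS n X Y \<phi>"
proof -
  obtain \<phi> where \<phi>: "\<phi> 1 = f1" "\<phi> 2 = f2" "seq_mor C n X Y \<phi>"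
    using N3[of X Y f1 f2] X Y FS_hom_sub[OF f1] FS_hom_sub[OF f2] c FS_other by auto
  then show ?thesis using seq_mor_up X Y by blast
qed

lemma cone_up: assumes nX: "is_nseq C n (A, \<alpha>)" and oX: "\<forall>i\<in>{1..n}. A i \<in> S"
  and oY: "\<forall>i\<in>{1..n}. B i \<in> S"
  and cone: "is_cone C n (A, \<alpha>) (B, \<beta>) \<phi> (D, \<gamma>)"
  shows "(\<forall>i\<in>{1..n}. D i \<in> S) \<and> is_cone FS n (A, \<alpha>) (B, \<beta>) \<phi> (D, \<gamma>)"
proof -
  obtain i1 i2 p1 p2 where
    bp: "\<forall>i\<in>{1..n}. biprod C (if i < n then A (Suc i) else sO C (A 1)) (B i) (D i) (i1 i) (i2 i) (p1 i) (p2 i)" and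
    eq1: "\<forall>i\<in>{1..<n}. \<gamma> i =
            madd C (madd C (cmp C (i1 (Suc i)) (cmp C (mneg C (\<alpha> (Suc i))) (p1 i)))
                           (cmp C (i2 (Suc i)) (cmp C (\<phi> (Suc i)) (p1 i))))
                   (cmp C (i2 (Suc i)) (cmp C (\<beta> i) (p2 i)))" and
    eq2: "\<gamma> n = madd C (madd C (cmp C (sM C (i1 1)) (cmp C (mneg C (sM C (\<alpha> 1))) (p1 n)))
                             (cmp C (sM C (i2 1)) (cmp C (sM C (\<phi> 1)) (p1 n))))
                     (cmp C (sM C (i2 1)) (cmp C (\<beta> n) (p2 n)))"
    using cone unfolding is_cone_def by auto
  have n1: "1 \<in> {1..n}" using n3 by auto
  have src: "i \<in> {1..n} \<Longrightarrow> (if i < n then A (Suc i) else sO C (A 1)) \<in> S" for i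
    using oX S_sO[of "A 1"] n1 by auto
  have DS: "\<forall>i\<in>{1..n}. D i \<in> S" using S_bp[OF src] oY bp by blast
  have bp': "\<forall>i\<in>{1..n}. biprod FS (if i < n then A (Suc i) else sO C (A 1)) (B i) (D i) (i1 i) (i2 i) (p1 i) (p2 i)"
    using biprod_up bp src oY DS by blast
  have mn: "mneg FS (\<alpha> (Suc i)) = mneg C (\<alpha> (Suc i))" if i: "i \<in> {1..<n}" for i
  proof (cases "Suc i < n")
    case True
    have "\<alpha> (Suc i) \<in> hom C (A (Suc i)) (A (Suc (Suc i)))" using nX True unfolding nseq_pair by auto
    then show ?thesis using mneg_sub oX True by auto
  next
    case False
    then have "Suc i = n" using i by auto
    moreover have "\<alpha> n \<in> hom C (A n) (sO C (A 1))" using nX unfolding nseq_pair by auto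
    ultimately show ?thesis using mneg_sub oX S_sO n1 n3 by auto
  qed
  have a1: "\<alpha> 1 \<in> hom C (A 1) (A 2)" using nX n3 unfolding nseq_pair by (auto simp: numeral_2_eq_2)
  have s: "A 1 \<in> S" "A 2 \<in> S" using oX n3 by auto
  have e: "mneg FS (sM C (\<alpha> 1)) = mneg C (sM C (\<alpha> 1))"
    using mneg_sub[OF sM_hom[OF a1] S_sO[OF s(1)] S_sO[OF s(2)]] .
  have eq1': "\<forall>i\<in>{1..<n}. \<gamma> i =
            madd C (madd C (cmp C (i1 (Suc i)) (cmp C (mneg FS (\<alpha> (Suc i))) (p1 i)))
                           (cmp C (i2 (Suc i)) (cmp C (\<phi> (Suc i)) (p1 i))))
                   (cmp C (i2 (Suc i)) (cmp C (\<beta> i) (p2 i)))"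
  proof
    fix i assume "i \<in> {1..<n}" then show "\<gamma> i =
            madd C (madd C (cmp C (i1 (Suc i)) (cmp C (mneg FS (\<alpha> (Suc i))) (p1 i)))
                           (cmp C (i2 (Suc i)) (cmp C (\<phi> (Suc i)) (p1 i))))
                   (cmp C (i2 (Suc i)) (cmp C (\<beta> i) (p2 i)))" using eq1 mn by simp
  qed
  have eq2': "\<gamma> n = madd C (madd C (cmp C (sM C (i1 1)) (cmp C (mneg FS (sM C (\<alpha> 1))) (p1 n)))
                             (cmp C (sM C (i2 1)) (cmp C (sM C (\<phi> 1)) (p1 n))))
                     (cmp C (sM C (i2 1)) (cmp C (\<beta> n) (p2 n)))" unfolding e by (rule eq2)
  have "is_cone FS n (A, \<alpha>) (B, \<beta>) \<phi> (D, \<gamma>)"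
    unfolding is_cone_def FS_other prod.case
    by (rule exI[of _ i1], rule exI[of _ i2], rule exI[of _ p1], rule exI[of _ p2]) (use bp' eq1' eq2' in blast)
  then show ?thesis using DS by blast
qed

lemma NS_4: assumes X: "X \<in> NS" and Y: "Y \<in> NS" and f1: "f1 \<in> hom FS (fst X 1) (fst Y 1)"
  and f2: "f2 \<in> hom FS (fst X 2) (fst Y 2)" and c: "cmp FS (snd Y 1) f1 = cmp FS f2 (snd X 1)"
  shows "\<exists>\<phi> Q. \<phi> 1 = f1 \<and> \<phi> 2 = f2 \<and> seq_mor FS n X Y \<phi> \<and> is_cone FS n X Y \<phi> Q \<and> Q \<in> NS"
proof -
  obtain \<phi> Q where \<phi>: "\<phi> 1 = f1" "\<phi> 2 = f2" "seq_mor C n X Y \<phi>" "is_cone C n X Y \<phi> Q" "Q \<in> N"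
    using N4[of X Y f1 f2] X Y FS_hom_sub[OF f1] FS_hom_sub[OF f2] c FS_other by auto
  obtain A \<alpha> where Xp: "X = (A, \<alpha>)" by (cases X)
  obtain B \<beta> where Yp: "Y = (B, \<beta>)" by (cases Y)
  obtain D \<gamma> where Qp: "Q = (D, \<gamma>)" by (cases Q)
  have "(\<forall>i\<in>{1..n}. D i \<in> S) \<and> is_cone FS n (A, \<alpha>) (B, \<beta>) \<phi> (D, \<gamma>)"
    by (rule cone_up) (use X Y Xp Yp Qp \<phi>(4) N_nseq in auto)
  then show ?thesis using seq_mor_up[OF \<phi>(3)] X Y \<phi> Xp Yp Qp by auto
qed

end


context nangH begin

lemma nang_FS: "nangulated FS n NS"
  unfolding nangulated_def
proof (intro conjI)
  show "additive FS" by (rule add_FS)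
  show "sigma_auto FS" by (rule sig_FS)
  show "\<forall>X\<in>NS. is_nseq FS n X" using NS_nseq by blast
  show "\<forall>X\<in>NS. \<forall>Y\<in>NS. \<forall>Z. is_nseq FS n Z \<longrightarrow> is_dsum FS n X Y Z \<longrightarrow> Z \<in> NS"
    using NS_sum by blast
  show "\<forall>Z\<in>NS. \<forall>X Y. is_nseq FS n X \<longrightarrow> is_nseq FS n Y \<longrightarrow> is_dsum FS n X Y Z \<longrightarrow> X \<in> NS"
    using NS_summand by blast
  show "\<forall>X\<in>NS. \<forall>Y. is_nseq FS n Y \<longrightarrow> seq_iso FS n X Y \<longrightarrow> Y \<in> NS"
    using NS_iso by blast
  show "\<forall>A\<in>ob FS. \<forall>Z. is_zero_obj FS Z \<longrightarrow>
        ((\<lambda>i. if i = 1 \<or> i = 2 then A else Z),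
         (\<lambda>i. if i = 1 then idm FS A
              else if i = 2 then mzero FS A Z
              else if i < n then mzero FS Z Z else mzero FS Z (sO FS A))) \<in> NS"
    using NS_triv by blast
  show "\<forall>A1\<in>ob FS. \<forall>A2\<in>ob FS. \<forall>f\<in>hom FS A1 A2. \<exists>X\<in>NS. fst X 1 = A1 \<and> fst X 2 = A2 \<and> snd X 1 = f"
    using NS_ext by blast
  show "\<forall>X. is_nseq FS n X \<longrightarrow> (X \<in> NS \<longleftrightarrow> lrot FS n X \<in> NS)"
    using NS_rot by blast
  show "\<forall>X\<in>NS. \<forall>Y\<in>NS. \<forall>f1 f2.
        f1 \<in> hom FS (fst X 1) (fst Y 1) \<longrightarrow> f2 \<in> hom FS (fst X 2) (fst Y 2) \<longrightarrow>
        cmp FS (snd Y 1) f1 = cmp FS f2 (snd X 1) \<longrightarrow>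
        (\<exists>\<phi>. \<phi> 1 = f1 \<and> \<phi> 2 = f2 \<and> seq_mor FS n X Y \<phi>)"
    using NS_3 by blast
  show "\<forall>X\<in>NS. \<forall>Y\<in>NS. \<forall>f1 f2.
        f1 \<in> hom FS (fst X 1) (fst Y 1) \<longrightarrow> f2 \<in> hom FS (fst X 2) (fst Y 2) \<longrightarrow>
        cmp FS (snd Y 1) f1 = cmp FS f2 (snd X 1) \<longrightarrow>
        (\<exists>\<phi> Q. \<phi> 1 = f1 \<and> \<phi> 2 = f2 \<and> seq_mor FS n X Y \<phi> \<and> is_cone FS n X Y \<phi> Q \<and> Q \<in> NS)"
    using NS_4 by blast
qed

lemma functor_FS: "nang_functor FS C n NS N id id"
  unfolding nang_functor_def
proof (intro conjI)
  show "\<forall>A\<in>ob FS. id A \<in> ob C" using FS_ob by auto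
  show "\<forall>A B f. f \<in> hom FS A B \<longrightarrow> id f \<in> hom C (id A) (id B)" using FS_hom_sub by auto
  show "\<forall>A\<in>ob FS. id (idm FS A) = idm C (id A)" using FS_other by auto
  show "\<forall>A B E f g. f \<in> hom FS A B \<longrightarrow> g \<in> hom FS B E \<longrightarrow> id (cmp FS g f) = cmp C (id g) (id f)"
    using FS_other by auto
  show "\<forall>A B f g. f \<in> hom FS A B \<longrightarrow> g \<in> hom FS A B \<longrightarrow> id (madd FS f g) = madd C (id f) (id g)"
    using FS_other by auto
  let ?\<eta> = "\<lambda>A. idm C (sO C A)"
  have i1: "\<forall>A\<in>ob FS. is_iso C (id (sO FS A)) (sO C (id A)) (?\<eta> A)"
    using id_iso sO_ob FS_ob FS_other by auto
  have i2: "\<forall>A B f. f \<in> hom FS A B \<longrightarrow> cmp C (?\<eta> B) (id (sM FS f)) = cmp C (sM C (id f)) (?\<eta> A)"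
  proof (intro allI impI)
    fix A B f assume "f \<in> hom FS A B"
    then have "sM C f \<in> hom C (sO C A) (sO C B)" using FS_hom_sub sM_hom by blast
    then show "cmp C (?\<eta> B) (id (sM FS f)) = cmp C (sM C (id f)) (?\<eta> A)"
      using id_l id_r FS_other by simp
  qed
  have i3: "\<forall>X\<in>NS. (id \<circ> fst X, \<lambda>i. if i = n then cmp C (?\<eta> (fst X 1)) (id (snd X n)) else id (snd X i)) \<in> N"
  proof
    fix X assume X: "X \<in> NS"
    obtain A \<alpha> where Xp: "X = (A, \<alpha>)" by (cases X)
    have "(A, \<alpha>) \<in> N" using X Xp by simp
    then have "is_nseq C n (A, \<alpha>)" by (rule N_nseq)
    then have "\<alpha> n \<in> hom C (A n) (sO C (A 1))" unfolding nseq_pair by blast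
    then have "cmp C (?\<eta> (A 1)) (\<alpha> n) = \<alpha> n" using id_l by blast
    then have e: "(\<lambda>i. if i = n then cmp C (?\<eta> (A 1)) (id (\<alpha> n)) else id (\<alpha> i)) = \<alpha>" by auto
    show "(id \<circ> fst X, \<lambda>i. if i = n then cmp C (?\<eta> (fst X 1)) (id (snd X n)) else id (snd X i)) \<in> N"
      unfolding Xp fst_conv snd_conv id_comp e using X Xp by simp
  qed
  show "\<exists>\<eta>. (\<forall>A\<in>ob FS. is_iso C (id (sO FS A)) (sO C (id A)) (\<eta> A)) \<and>
          (\<forall>A B f. f \<in> hom FS A B \<longrightarrow> cmp C (\<eta> B) (id (sM FS f)) = cmp C (sM C (id f)) (\<eta> A)) \<and>
          (\<forall>X\<in>NS. (id \<circ> fst X, \<lambda>i. if i = n then cmp C (\<eta> (fst X 1)) (id (snd X n)) else id (snd X i)) \<in> N)"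
    by (rule exI[of _ ?\<eta>]) (use i1 i2 i3 in \<open>intro conjI\<close>)
qed

lemma main: "nang_subcat C n N S NS \<and> complete_sub C n N S \<and> dense_sub C S"
proof (intro conjI)
  show "nang_subcat C n N S NS"
    unfolding nang_subcat_def
  proof (intro conjI)
    show "S \<subseteq> ob C" by blast
    show "\<forall>A\<in>S. \<forall>B\<in>ob C. isomorphic C A B \<longrightarrow> B \<in> S" using S_isoc by blast
    show "nangulated FS n NS" by (rule nang_FS)
    show "nang_functor FS C n NS N id id" by (rule functor_FS)
  qed
  show "complete_sub C n N S" unfolding complete_sub_def using S_complete by blast
  show "dense_sub C S" unfolding dense_sub_def
  proof
    fix X assume X: "X \<in> ob C"
    obtain D i1 i2 p1 p2 where bp: "biprod C X (sO C X) D i1 i2 p1 p2" using bp_ex[OF X sO_ob[OF X]] by blast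
    have "gen C D \<in> Hp" using dense_R[OF X bp] R_Hp by blast
    moreover have "D \<in> ob C" using bp unfolding biprod_def by blast
    ultimately have "D \<in> S" using S_iff by blast
    then show "\<exists>B\<in>S. \<exists>Y i1 i2 p1 p2. biprod C X Y B i1 i2 p1 p2" using bp by blast
  qed
qed

end

theorem lemma4p5:
  fixes C :: "('o, 'm) catS" and n :: nat and N :: "('o, 'm) nseq set"
    and H :: "('o set \<Rightarrow>\<^sub>0 int) set set"
  assumes "n \<ge> 3" and "odd n"
    and "nangulated C n N"
    and "subgroup H (K0 C n N)"
  shows "nang_subcat C n N {A \<in> ob C. K0cls C n N A \<in> H}
           {X \<in> N. \<forall>i\<in>{1..n}. fst X i \<in> {A \<in> ob C. K0cls C n N A \<in> H}}
       \<and> complete_sub C n N {A \<in> ob C. K0cls C n N A \<in> H}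
       \<and> dense_sub C {A \<in> ob C. K0cls C n N A \<in> H}"
proof -
  have "nangH C n N H" unfolding nangH_def nangH_axioms_def nang_def using assms by blast
  then interpret nangH C n N H .
  show ?thesis by (rule main)
qed


end
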